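(* There exists a smooth cubic surface over $\mathbb{F}_8$ all 27 of whose lines are defined over $\mathbb{F}_8$. *)

theory Defs
  imports "HOL-Algebra.Algebraic_Closure_Type" "HOL-Library.Numeral_Type"
begin

text \<open>Points of affine 4-space k^4 (homogeneous coordinates x0..x3 of P^3) are
  functions from the 4-element index type.  A cubic form in 4 variables is given by
  its coefficients on the monomials x^e with e an exponent vector of total degree 3.\<close>

definition cubic_monomials :: "(4 \<Rightarrow> nat) set" where
  "cubic_monomials = {e. (\<Sum>i\<in>UNIV. e i) = 3}"

type_synonym 'k cubic_form = "(4 \<Rightarrow> nat) \<Rightarrow> 'k"

definition eval_form :: "'k::comm_ring_1 cubic_form \<Rightarrow> (4 \<Rightarrow> 'k) \<Rightarrow> 'k" where
  "eval_form c x = (\<Sum>e\<in>cubic_monomials. c e * (\<Prod>i\<in>UNIV. x i ^ e i))"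

definition eval_partial :: "'k::comm_ring_1 cubic_form \<Rightarrow> 4 \<Rightarrow> (4 \<Rightarrow> 'k) \<Rightarrow> 'k" where
  "eval_partial c j x = (\<Sum>e\<in>cubic_monomials.
      c e * of_nat (e j) * x j ^ (e j - 1) * (\<Prod>i\<in>UNIV - {j}. x i ^ e i))"

definition form_ac :: "'k::field cubic_form \<Rightarrow> 'k alg_closure cubic_form" where
  "form_ac c = (\<lambda>e. to_ac (c e))"

definition smooth_cubic :: "'k::field cubic_form \<Rightarrow> bool" where
  "smooth_cubic c \<longleftrightarrow>
     (\<forall>x :: 4 \<Rightarrow> 'k alg_closure. (\<exists>i. x i \<noteq> 0) \<longrightarrow>
        \<not> (eval_form (form_ac c) x = 0 \<and> (\<forall>j. eval_partial (form_ac c) j x = 0)))"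

text \<open>Lines of P^3 over a field K = 2-dimensional linear subspaces of K^4.\<close>
definition lin_indep2 :: "(4 \<Rightarrow> 'k::field) \<Rightarrow> (4 \<Rightarrow> 'k) \<Rightarrow> bool" where
  "lin_indep2 u v \<longleftrightarrow> (\<forall>s t. (\<forall>i. s * u i + t * v i = 0) \<longrightarrow> s = 0 \<and> t = 0)"

definition span2 :: "(4 \<Rightarrow> 'k::field) \<Rightarrow> (4 \<Rightarrow> 'k) \<Rightarrow> (4 \<Rightarrow> 'k) set" where
  "span2 u v = {\<lambda>i. s * u i + t * v i | s t. True}"

definition is_line :: "(4 \<Rightarrow> 'k::field) set \<Rightarrow> bool" where
  "is_line L \<longleftrightarrow> (\<exists>u v. lin_indep2 u v \<and> L = span2 u v)"

definition lines_on :: "'k::field cubic_form \<Rightarrow> (4 \<Rightarrow> 'k alg_closure) set set" where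
  "lines_on c = {L. is_line L \<and> (\<forall>x\<in>L. eval_form (form_ac c) x = 0)}"

definition defined_over_base :: "(4 \<Rightarrow> 'k::field alg_closure) set \<Rightarrow> bool" where
  "defined_over_base L \<longleftrightarrow>
     (\<exists>u v :: 4 \<Rightarrow> 'k. L = span2 (\<lambda>i. to_ac (u i)) (\<lambda>i. to_ac (v i)))"

end

theory Submission
  imports Defs
begin

lemma cert0: fixes g :: "'a::comm_ring_1" assumes "g = 2*k"  "(2::'a) = 0" shows "g = 0"
  using assms by simp
lemma cert1: fixes g :: "'a::comm_ring_1" assumes "g = hA*fA + 2*k" "fA = 0" "(2::'a) = 0" shows "g = 0"
  using assms by simp
lemma cert2: fixes g :: "'a::comm_ring_1" assumes "g = hA*fA + hB*fB + 2*k" "fA = 0" "fB = 0" "(2::'a) = 0" shows "g = 0"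
  using assms by simp
lemma cert3: fixes g :: "'a::comm_ring_1" assumes "g = hA*fA + hB*fB + hC*fC + 2*k" "fA = 0" "fB = 0" "fC = 0" "(2::'a) = 0" shows "g = 0"
  using assms by simp
lemma cert4: fixes g :: "'a::comm_ring_1" assumes "g = hA*fA + hB*fB + hC*fC + hD*fD + 2*k" "fA = 0" "fB = 0" "fC = 0" "fD = 0" "(2::'a) = 0" shows "g = 0"
  using assms by simp
lemma cert5: fixes g :: "'a::comm_ring_1" assumes "g = hA*fA + hB*fB + hC*fC + hD*fD + hE*fE + 2*k" "fA = 0" "fB = 0" "fC = 0" "fD = 0" "fE = 0" "(2::'a) = 0" shows "g = 0"
  using assms by simp
lemma cert6: fixes g :: "'a::comm_ring_1" assumes "g = hA*fA + hB*fB + hC*fC + hD*fD + hE*fE + hF*fF + 2*k" "fA = 0" "fB = 0" "fC = 0" "fD = 0" "fE = 0" "fF = 0" "(2::'a) = 0" shows "g = 0"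
  using assms by simp


lemma d0: "x - y = 0 \<Longrightarrow> (x::'a::comm_ring_1) = y" by simp

lemma c2eq: assumes two: "(2::'a::comm_ring_1) = 0" and h: "x + y = (0::'a)" shows "x = y"
proof (rule d0)
  show "x - y = 0" by (rule cert1[where hA=1 and k="-y", OF _ h two]) (simp add: algebra_simps)
qed

lemma flip1: assumes two: "(2::'a::comm_ring_1) = 0" and h: "1 + d = (r::'a)" shows "d = 1 + r"
proof (rule d0)
  have h': "1 + d - r = 0" using h by simp
  show "d - (1 + r) = 0" by (rule cert1[where hA=1 and k="-1", OF _ h' two]) (simp add: algebra_simps)
qed

lemma zo: assumes two: "(2::'a::idom) = 0" and h: "x * (1 + x) = (0::'a)" shows "x = 0 \<or> x = 1"
proof -
  have "x = 0 \<or> 1 + x = 0" using h by (metis mult_eq_0_iff)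
  then show ?thesis using c2eq[OF two, of 1 x] by auto
qed

lemma U4: "(UNIV :: 4 set) = {0,1,2,3}"
proof -
  have c: "card {0::4,1,2,3} = 4" by simp
  have "card (UNIV :: 4 set) = 4" by simp
  then show ?thesis using c by (metis card_subset_eq finite subset_UNIV)
qed

definition vec :: "'a \<Rightarrow> 'a \<Rightarrow> 'a \<Rightarrow> 'a \<Rightarrow> 4 \<Rightarrow> 'a" where
  "vec a b c d = (\<lambda>i. if i = 0 then a else if i = 1 then b else if i = 2 then c else d)"

lemma vec_simps [simp]: "vec a b c d 0 = a" "vec a b c d 1 = b" "vec a b c d 2 = c" "vec a b c d 3 = d"
  by (simp_all add: vec_def)

lemma vec_eq_iff [simp]: "vec a b c d = vec a' b' c' d' \<longleftrightarrow> a = a' \<and> b = b' \<and> c = c' \<and> d = d'"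
  by (metis vec_simps)

lemma fun4_eq: "(f::4 \<Rightarrow> 'a) = vec (f 0) (f 1) (f 2) (f 3)"
proof
  fix i :: 4
  have "i \<in> {0,1,2,3}" using U4 by blast
  then show "f i = vec (f 0) (f 1) (f 2) (f 3) i" by auto
qed

lemma all4: "(\<forall>i::4. Q i) \<longleftrightarrow> Q 0 \<and> Q 1 \<and> Q 2 \<and> Q 3"
proof
  assume h: "Q 0 \<and> Q 1 \<and> Q 2 \<and> Q 3"
  show "\<forall>i. Q i"
  proof
    fix i :: 4
    have "i \<in> {0,1,2,3}" using U4 by blast
    then show "Q i" using h by auto
  qed
qed auto

lemma ex4: "(\<exists>i::4. Q i) \<longleftrightarrow> Q 0 \<or> Q 1 \<or> Q 2 \<or> Q 3"
  using all4[of "\<lambda>i. \<not> Q i"] by blast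

lemma neq4: "(0::4) \<noteq> 1" "(0::4) \<noteq> 2" "(0::4) \<noteq> 3" "(1::4) \<noteq> 2" "(1::4) \<noteq> 3" "(2::4) \<noteq> 3"
  by simp_all

lemma D4: "UNIV - {0::4} = {1,2,3}" "UNIV - {1::4} = {0,2,3}" "UNIV - {2::4} = {0,1,3}" "UNIV - {3::4} = {0,1,2}"
  unfolding U4 using neq4 neq4[symmetric] by blast+

lemma lin_vec: "(\<lambda>i. s * vec a0 a1 a2 a3 i + t * vec b0 b1 b2 b3 i) = vec (s*a0 + t*b0) (s*a1 + t*b1) (s*a2 + t*b2) (s*a3 + t*b3)"
  by (rule ext) (simp add: vec_def)

lemma span2_vec: "span2 (vec a0 a1 a2 a3) (vec b0 b1 b2 b3) = {vec (s*a0 + t*b0) (s*a1 + t*b1) (s*a2 + t*b2) (s*a3 + t*b3) | s t. True}"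
  by (simp add: span2_def lin_vec)

lemma to_ac_vec: "(\<lambda>i. to_ac (vec a b c d i)) = vec (to_ac a) (to_ac b) (to_ac c) (to_ac d)"
  by (rule ext) (simp add: vec_def)

section \<open>The cubic form\<close>

definition P :: "(4 \<Rightarrow> 'a::comm_ring_1) \<Rightarrow> 'a" where
  "P x = x 0 ^ 2 * x 1 + x 0 * x 1 ^ 2 + x 1 * x 2 * x 3 + x 2 ^ 2 * x 3 + x 2 * x 3 ^ 2"

definition Bc :: "(4 \<Rightarrow> 'a::comm_ring_1) \<Rightarrow> (4 \<Rightarrow> 'a) \<Rightarrow> 'a" where
  "Bc p q = q 0 * (2 * p 0 * p 1 + p 1 ^ 2) + q 1 * (p 0 ^ 2 + 2 * p 0 * p 1 + p 2 * p 3)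
     + q 2 * (p 1 * p 3 + 2 * p 2 * p 3 + p 3 ^ 2) + q 3 * (p 1 * p 2 + p 2 ^ 2 + 2 * p 2 * p 3)"

lemma expand0: fixes s t p0 p1 p2 p3 q0 q1 q2 q3 :: "'a::comm_ring_1"
  shows "(s * p0 + t * q0)^2 * (s * p1 + t * q1) + (s * p0 + t * q0) * (s * p1 + t * q1)^2 +
     (s * p1 + t * q1) * (s * p2 + t * q2) * (s * p3 + t * q3) +
     (s * p2 + t * q2)^2 * (s * p3 + t * q3) + (s * p2 + t * q2) * (s * p3 + t * q3)^2 =
   s^3 * (p0^2 * p1 + p0 * p1^2 + p1 * p2 * p3 + p2^2 * p3 + p2 * p3^2)
   + s^2 * t * (q0 * (2 * p0 * p1 + p1 ^ 2) + q1 * (p0 ^ 2 + 2 * p0 * p1 + p2 * p3)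
     + q2 * (p1 * p3 + 2 * p2 * p3 + p3 ^ 2) + q3 * (p1 * p2 + p2 ^ 2 + 2 * p2 * p3))
   + s * t^2 * (p0 * (2 * q0 * q1 + q1 ^ 2) + p1 * (q0 ^ 2 + 2 * q0 * q1 + q2 * q3)
     + p2 * (q1 * q3 + 2 * q2 * q3 + q3 ^ 2) + p3 * (q1 * q2 + q2 ^ 2 + 2 * q2 * q3))
   + t^3 * (q0^2 * q1 + q0 * q1^2 + q1 * q2 * q3 + q2^2 * q3 + q2 * q3^2)"
  by (simp add: algebra_simps power2_eq_square power3_eq_cube)

lemma expand: "P (\<lambda>i. s * p i + t * q i) = s^3 * P p + s^2 * t * Bc p q + s * t^2 * Bc q p + t^3 * P q"
  unfolding P_def Bc_def by (rule expand0)

lemma onS: assumes "P p = 0" "P q = 0" "Bc p q = 0" "Bc q p = 0" shows "\<forall>x\<in>span2 p q. P x = 0"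
  using assms by (auto simp: span2_def expand)

definition S5 :: "(4 \<Rightarrow> nat) set" where
  "S5 = {vec 2 1 0 0, vec 1 2 0 0, vec 0 1 1 1, vec 0 0 2 1, vec 0 0 1 2}"

definition c0 :: "'k::field cubic_form" where
  "c0 e = (if e \<in> S5 then 1 else 0)"

lemma form_ac_c0: "form_ac c0 = (\<lambda>e. if e \<in> S5 then 1 else 0)"
  by (simp add: form_ac_def c0_def fun_eq_iff)

lemma finite_CM: "finite cubic_monomials"
proof -
  have "cubic_monomials \<subseteq> PiE UNIV (\<lambda>_. {..3::nat})"
  proof
    fix e assume "e \<in> cubic_monomials"
    then have "sum e UNIV = 3" by (simp add: cubic_monomials_def)
    moreover have "\<And>i. e i \<le> sum e UNIV" by (rule member_le_sum) auto
    ultimately show "e \<in> PiE UNIV (\<lambda>_. {..3::nat})" by (simp add: PiE_UNIV_domain)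
  qed
  moreover have "finite (PiE (UNIV::4 set) (\<lambda>_. {..3::nat}))" by (rule finite_PiE) auto
  ultimately show ?thesis by (rule finite_subset)
qed

lemma sumU: "sum (f::4 \<Rightarrow> 'b::comm_monoid_add) UNIV = f 0 + f 1 + f 2 + f 3"
  unfolding U4 using neq4 by (simp add: add.assoc)

lemma S5_sub: "S5 \<subseteq> cubic_monomials"
  unfolding S5_def cubic_monomials_def by (simp add: sumU)

lemma sum_S5':
  assumes "\<And>e. e \<notin> S5 \<Longrightarrow> f e = 0"
  shows "sum f cubic_monomials = sum f S5"
  by (rule sum.mono_neutral_right[OF finite_CM S5_sub]) (use assms in auto)

lemma sum_S5_expand: "sum f S5 = f (vec 2 1 0 0) + f (vec 1 2 0 0) + f (vec 0 1 1 1) + f (vec 0 0 2 1) + (f (vec 0 0 1 2) :: 'a::comm_ring_1)"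
  unfolding S5_def by (simp add: add.assoc)

lemma eval_form_c0: "eval_form (form_ac (c0::'k::field cubic_form)) x = P x"
proof -
  have "eval_form (form_ac (c0::'k cubic_form)) x = (\<Sum>e\<in>S5. (if e \<in> S5 then 1 else 0) * (\<Prod>i\<in>{0,1,2,3}. x i ^ e i))"
    unfolding eval_form_def form_ac_c0 U4 by (rule sum_S5') simp
  also have "\<dots> = P x"
    unfolding sum_S5_expand by (simp add: S5_def P_def)
  finally show ?thesis .
qed

lemma eval_partial_c0_0:
  fixes x :: "4 \<Rightarrow> 'k::field alg_closure"
  assumes two: "(2::'k alg_closure) = 0"
  shows "eval_partial (form_ac (c0::'k cubic_form)) 0 x = x 1 ^ 2"
proof -
  have "eval_partial (form_ac (c0::'k cubic_form)) 0 x = (\<Sum>e\<in>S5.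
      (if e \<in> S5 then 1 else 0) * of_nat (e 0) * x 0 ^ (e 0 - 1) * (\<Prod>i\<in>{1,2,3}. x i ^ e i))"
    unfolding eval_partial_def form_ac_c0 D4 by (rule sum_S5') simp
  also have "\<dots> = x 1 ^ 2"
    unfolding sum_S5_expand by (simp add: S5_def two)
  finally show ?thesis .
qed

lemma eval_partial_c0_1:
  fixes x :: "4 \<Rightarrow> 'k::field alg_closure"
  assumes two: "(2::'k alg_closure) = 0"
  shows "eval_partial (form_ac (c0::'k cubic_form)) 1 x = x 0 ^ 2 + x 2 * x 3"
proof -
  have "eval_partial (form_ac (c0::'k cubic_form)) 1 x = (\<Sum>e\<in>S5.
      (if e \<in> S5 then 1 else 0) * of_nat (e 1) * x 1 ^ (e 1 - 1) * (\<Prod>i\<in>{0,2,3}. x i ^ e i))"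
    unfolding eval_partial_def form_ac_c0 D4 by (rule sum_S5') simp
  also have "\<dots> = x 0 ^ 2 + x 2 * x 3"
    unfolding sum_S5_expand by (simp add: S5_def two)
  finally show ?thesis .
qed

lemma eval_partial_c0_2:
  fixes x :: "4 \<Rightarrow> 'k::field alg_closure"
  assumes two: "(2::'k alg_closure) = 0"
  shows "eval_partial (form_ac (c0::'k cubic_form)) 2 x = x 1 * x 3 + x 3 ^ 2"
proof -
  have "eval_partial (form_ac (c0::'k cubic_form)) 2 x = (\<Sum>e\<in>S5.
      (if e \<in> S5 then 1 else 0) * of_nat (e 2) * x 2 ^ (e 2 - 1) * (\<Prod>i\<in>{0,1,3}. x i ^ e i))"
    unfolding eval_partial_def form_ac_c0 D4 by (rule sum_S5') simp
  also have "\<dots> = x 1 * x 3 + x 3 ^ 2"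
    unfolding sum_S5_expand by (simp add: S5_def two)
  finally show ?thesis .
qed

lemma eval_partial_c0_3:
  fixes x :: "4 \<Rightarrow> 'k::field alg_closure"
  assumes two: "(2::'k alg_closure) = 0"
  shows "eval_partial (form_ac (c0::'k cubic_form)) 3 x = x 1 * x 2 + x 2 ^ 2"
proof -
  have "eval_partial (form_ac (c0::'k cubic_form)) 3 x = (\<Sum>e\<in>S5.
      (if e \<in> S5 then 1 else 0) * of_nat (e 3) * x 3 ^ (e 3 - 1) * (\<Prod>i\<in>{0,1,2}. x i ^ e i))"
    unfolding eval_partial_def form_ac_c0 D4 by (rule sum_S5') simp
  also have "\<dots> = x 1 * x 2 + x 2 ^ 2"
    unfolding sum_S5_expand by (simp add: S5_def two)
  finally show ?thesis .
qed


lemma smooth_c0: assumes two: "(2::'k::field alg_closure) = 0" shows "smooth_cubic (c0::'k cubic_form)"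
  unfolding smooth_cubic_def
proof (intro allI impI notI)
  fix x :: "4 \<Rightarrow> 'k alg_closure"
  assume nz: "\<exists>i. x i \<noteq> 0" and h: "eval_form (form_ac c0) x = 0 \<and> (\<forall>j. eval_partial (form_ac (c0::'k cubic_form)) j x = 0)"
  then have e: "\<And>j. eval_partial (form_ac (c0::'k cubic_form)) j x = 0" by blast
  have d: "x 1 ^ 2 = 0" "x 0 ^ 2 + x 2 * x 3 = 0" "x 1 * x 3 + x 3 ^ 2 = 0" "x 1 * x 2 + x 2 ^ 2 = 0"
    using e[of 0] e[of 1] e[of 2] e[of 3]
    unfolding eval_partial_c0_0[OF two] eval_partial_c0_1[OF two] eval_partial_c0_2[OF two] eval_partial_c0_3[OF two]
    by auto
  from d(1) have 1: "x 1 = 0" by simp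
  with d(3) have 3: "x 3 = 0" by simp
  from d(4) 1 have 2: "x 2 = 0" by simp
  from d(2) 2 have 0: "x 0 = 0" by simp
  from nz 0 1 2 3 show False by (simp add: ex4)
qed

section \<open>Fields with 8 elements\<close>

lemma card8_fin: assumes "CARD('k) = 8" shows "finite (UNIV::'k set)"
  using assms card.infinite by force

lemma card8_two: assumes "CARD('k::field) = 8" shows "(2::'k) = 0"
proof -
  have fin: "finite (UNIV::'k set)" by (rule card8_fin[OF assms])
  have "(\<Sum>y\<in>UNIV. y + (1::'k)) = (\<Sum>y\<in>UNIV. y)"
    by (rule sum.reindex_bij_witness[where i="\<lambda>b. b - 1" and j="\<lambda>a. a + 1"]) auto
  moreover have "(\<Sum>y\<in>UNIV. y + (1::'k)) = (\<Sum>y\<in>UNIV. y) + of_nat (card (UNIV::'k set))"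
    by (simp add: sum.distrib)
  ultimately have "of_nat (card (UNIV::'k set)) = (0::'k)" by simp
  then have "(8::'k) = 0" using assms by simp
  then have "(2::'k) * 2 * 2 = 0" by simp
  then show ?thesis by (metis mult_eq_0_iff)
qed

lemma card8_pow7: assumes "CARD('k::field) = 8" and x0: "(x::'k) \<noteq> 0" shows "x ^ 7 = 1"
proof -
  have fin: "finite (UNIV::'k set)" by (rule card8_fin[OF assms(1)])
  let ?A = "UNIV - {0::'k}"
  have finA: "finite ?A" using fin by simp
  have "(\<Prod>y\<in>?A. x * y) = (\<Prod>y\<in>?A. y)"
    by (rule prod.reindex_bij_witness[where i="\<lambda>b. b / x" and j="\<lambda>a. x * a"]) (use x0 in auto)
  moreover have "(\<Prod>y\<in>?A. x * y) = x ^ card ?A * (\<Prod>y\<in>?A. y)"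
    by (simp add: prod.distrib)
  moreover have "card ?A = 7" using assms(1) fin by (simp add: card_Diff_singleton)
  moreover have "(\<Prod>y\<in>?A. y) \<noteq> 0" using finA by simp
  ultimately show ?thesis by simp
qed

lemma card8_root: assumes "CARD('k::field) = 8" shows "\<exists>a::'k. a^3 + a + 1 = 0"
proof -
  have two: "(2::'k) = 0" by (rule card8_two[OF assms])
  have "\<not> (UNIV::'k set) \<subseteq> {0,1}"
  proof
    assume "(UNIV::'k set) \<subseteq> {0,1}"
    then have "card (UNIV::'k set) \<le> card {0::'k,1}" by (rule card_mono[rotated]) simp
    also have "card {0::'k,1} = 2" by simp
    finally show False using assms by simp
  qed
  then obtain x::'k where x0: "x \<noteq> 0" and x1: "x \<noteq> 1" by blast
  have x7: "x ^ 7 = 1" by (rule card8_pow7[OF assms x0])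
  have h7: "x*x*x*x*x*x*x - 1 = 0" using x7 by (simp add: eval_nat_numeral mult.assoc)
  have "(x + 1) * (x*x*x + x + 1) * (x*x*x + x*x + 1) = 0"
    by (rule cert1[where hA="(1)" and k="(x*x*x*x*x*x + x*x*x*x*x + 2*x*x*x*x + 2*x*x*x + x*x + x + 1)", OF _ h7 two]) (simp add: algebra_simps power2_eq_square power3_eq_cube)
  then have "x + 1 = 0 \<or> x*x*x + x + 1 = 0 \<or> x*x*x + x*x + 1 = 0" by (metis mult_eq_0_iff)
  moreover have "x + 1 \<noteq> 0" using c2eq[OF two, of x 1] x1 by auto
  ultimately consider "x*x*x + x + 1 = 0" | "x*x*x + x*x + 1 = 0" by blast
  then show ?thesis
  proof cases
    case 1
    then show ?thesis by (intro exI[of _ x]) (simp add: power3_eq_cube)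
  next
    case 2
    then have h3: "x*x*x + x*x + 1 = 0" .
    show ?thesis
    proof (rule exI[of _ "x + 1"])
      show "(x + 1)^3 + (x + 1) + 1 = 0"
        by (rule cert1[where hA="(1)" and k="(x*x + 2*x + 1)", OF _ h3 two]) (simp add: algebra_simps power2_eq_square power3_eq_cube)
    qed
  qed
qed

section \<open>Charts of lines\<close>

definition G :: "'a::field \<Rightarrow> 'a::field \<Rightarrow> 'a::field \<Rightarrow> 'a::field \<Rightarrow> (4 \<Rightarrow> 'a) set" where
  "G a b c d = span2 (vec 1 0 a b) (vec 0 1 c d)"

lemma mem_G: "x \<in> (G a b c d) \<longleftrightarrow> x 2 = x 0 * a + x 1 * c \<and> x 3 = x 0 * b + x 1 * d"
proof
  assume "x \<in> (G a b c d)"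
  then obtain s t where "x = vec (s * 1 + t * 0) (s * 0 + t * 1) (s * a + t * c) (s * b + t * d)" unfolding G_def span2_vec by blast
  then show "x 2 = x 0 * a + x 1 * c \<and> x 3 = x 0 * b + x 1 * d" by simp
next
  assume h: "x 2 = x 0 * a + x 1 * c \<and> x 3 = x 0 * b + x 1 * d"
  have "x = vec (x 0) (x 1) (x 2) (x 3)" by (rule fun4_eq)
  also have "\<dots> = vec (x 0 * 1 + x 1 * 0) (x 0 * 0 + x 1 * 1) (x 0 * a + x 1 * c) (x 0 * b + x 1 * d)" using h by simp
  finally show "x \<in> (G a b c d)" unfolding G_def span2_vec by blast
qed

lemma G_inj: "(G a b c d) = (G a2 b2 c2 d2) \<longleftrightarrow> a = a2 \<and> b = b2 \<and> c = c2 \<and> d = d2"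
proof
  assume e: "(G a b c d) = (G a2 b2 c2 d2)"
  have 1: "vec 1 0 a b \<in> (G a2 b2 c2 d2)" unfolding e[symmetric] mem_G by simp
  have 2: "vec 0 1 c d \<in> (G a2 b2 c2 d2)" unfolding e[symmetric] mem_G by simp
  from 1 2 show "a = a2 \<and> b = b2 \<and> c = c2 \<and> d = d2" unfolding mem_G by simp
qed simp

lemma li_G: "lin_indep2 (vec 1 0 a b) (vec 0 1 c d :: 4 \<Rightarrow> 'a::field)"
  unfolding lin_indep2_def
proof (intro allI impI)
  fix s t :: 'a assume h: "\<forall>i. s * vec 1 0 a b i + t * vec 0 1 c d i = 0"
  from h[rule_format, of 0] h[rule_format, of 1] show "s = 0 \<and> t = 0" by simp
qed

lemma isl_G: "is_line (G a b c d)"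
  unfolding is_line_def G_def using li_G by blast

lemma dob_G0: "defined_over_base ((G (to_ac a) (to_ac b) (to_ac c) (to_ac d)) :: (4 \<Rightarrow> 'k::field alg_closure) set)"
  unfolding defined_over_base_def G_def
  by (rule exI[of _ "vec 1 0 a b"], rule exI[of _ "vec 0 1 c d"]) (simp add: to_ac_vec)

lemma dob_G: "a \<in> range to_ac \<Longrightarrow> b \<in> range to_ac \<Longrightarrow> c \<in> range to_ac \<Longrightarrow> d \<in> range to_ac \<Longrightarrow> defined_over_base ((G a b c d) :: (4 \<Rightarrow> 'k::field alg_closure) set)"
  by (auto intro!: dob_G0)

definition H02 :: "'a::field \<Rightarrow> 'a::field \<Rightarrow> 'a::field \<Rightarrow> (4 \<Rightarrow> 'a) set" where
  "H02 a b c = span2 (vec 1 a 0 b) (vec 0 0 1 c)"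

lemma mem_H02: "x \<in> (H02 a b c) \<longleftrightarrow> x 1 = x 0 * a + x 2 * 0 \<and> x 3 = x 0 * b + x 2 * c"
proof
  assume "x \<in> (H02 a b c)"
  then obtain s t where "x = vec (s * 1 + t * 0) (s * a + t * 0) (s * 0 + t * 1) (s * b + t * c)" unfolding H02_def span2_vec by blast
  then show "x 1 = x 0 * a + x 2 * 0 \<and> x 3 = x 0 * b + x 2 * c" by simp
next
  assume h: "x 1 = x 0 * a + x 2 * 0 \<and> x 3 = x 0 * b + x 2 * c"
  have "x = vec (x 0) (x 1) (x 2) (x 3)" by (rule fun4_eq)
  also have "\<dots> = vec (x 0 * 1 + x 2 * 0) (x 0 * a + x 2 * 0) (x 0 * 0 + x 2 * 1) (x 0 * b + x 2 * c)" using h by simp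
  finally show "x \<in> (H02 a b c)" unfolding H02_def span2_vec by blast
qed

lemma H02_inj: "(H02 a b c) = (H02 a2 b2 c2) \<longleftrightarrow> a = a2 \<and> b = b2 \<and> c = c2"
proof
  assume e: "(H02 a b c) = (H02 a2 b2 c2)"
  have 1: "vec 1 a 0 b \<in> (H02 a2 b2 c2)" unfolding e[symmetric] mem_H02 by simp
  have 2: "vec 0 0 1 c \<in> (H02 a2 b2 c2)" unfolding e[symmetric] mem_H02 by simp
  from 1 2 show "a = a2 \<and> b = b2 \<and> c = c2" unfolding mem_H02 by simp
qed simp

lemma li_H02: "lin_indep2 (vec 1 a 0 b) (vec 0 0 1 c :: 4 \<Rightarrow> 'a::field)"
  unfolding lin_indep2_def
proof (intro allI impI)
  fix s t :: 'a assume h: "\<forall>i. s * vec 1 a 0 b i + t * vec 0 0 1 c i = 0"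
  from h[rule_format, of 0] h[rule_format, of 2] show "s = 0 \<and> t = 0" by simp
qed

lemma isl_H02: "is_line (H02 a b c)"
  unfolding is_line_def H02_def using li_H02 by blast

lemma dob_H020: "defined_over_base ((H02 (to_ac a) (to_ac b) (to_ac c)) :: (4 \<Rightarrow> 'k::field alg_closure) set)"
  unfolding defined_over_base_def H02_def
  by (rule exI[of _ "vec 1 a 0 b"], rule exI[of _ "vec 0 0 1 c"]) (simp add: to_ac_vec)

lemma dob_H02: "a \<in> range to_ac \<Longrightarrow> b \<in> range to_ac \<Longrightarrow> c \<in> range to_ac \<Longrightarrow> defined_over_base ((H02 a b c) :: (4 \<Rightarrow> 'k::field alg_closure) set)"
  by (auto intro!: dob_H020)

definition H03 :: "'a::field \<Rightarrow> 'a::field \<Rightarrow> (4 \<Rightarrow> 'a) set" where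
  "H03 a b = span2 (vec 1 a b 0) (vec 0 0 0 1)"

lemma mem_H03: "x \<in> (H03 a b) \<longleftrightarrow> x 1 = x 0 * a + x 3 * 0 \<and> x 2 = x 0 * b + x 3 * 0"
proof
  assume "x \<in> (H03 a b)"
  then obtain s t where "x = vec (s * 1 + t * 0) (s * a + t * 0) (s * b + t * 0) (s * 0 + t * 1)" unfolding H03_def span2_vec by blast
  then show "x 1 = x 0 * a + x 3 * 0 \<and> x 2 = x 0 * b + x 3 * 0" by simp
next
  assume h: "x 1 = x 0 * a + x 3 * 0 \<and> x 2 = x 0 * b + x 3 * 0"
  have "x = vec (x 0) (x 1) (x 2) (x 3)" by (rule fun4_eq)
  also have "\<dots> = vec (x 0 * 1 + x 3 * 0) (x 0 * a + x 3 * 0) (x 0 * b + x 3 * 0) (x 0 * 0 + x 3 * 1)" using h by simp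
  finally show "x \<in> (H03 a b)" unfolding H03_def span2_vec by blast
qed

lemma H03_inj: "(H03 a b) = (H03 a2 b2) \<longleftrightarrow> a = a2 \<and> b = b2"
proof
  assume e: "(H03 a b) = (H03 a2 b2)"
  have 1: "vec 1 a b 0 \<in> (H03 a2 b2)" unfolding e[symmetric] mem_H03 by simp
  have 2: "vec 0 0 0 1 \<in> (H03 a2 b2)" unfolding e[symmetric] mem_H03 by simp
  from 1 2 show "a = a2 \<and> b = b2" unfolding mem_H03 by simp
qed simp

lemma li_H03: "lin_indep2 (vec 1 a b 0) (vec 0 0 0 1 :: 4 \<Rightarrow> 'a::field)"
  unfolding lin_indep2_def
proof (intro allI impI)
  fix s t :: 'a assume h: "\<forall>i. s * vec 1 a b 0 i + t * vec 0 0 0 1 i = 0"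
  from h[rule_format, of 0] h[rule_format, of 3] show "s = 0 \<and> t = 0" by simp
qed

lemma isl_H03: "is_line (H03 a b)"
  unfolding is_line_def H03_def using li_H03 by blast

lemma dob_H030: "defined_over_base ((H03 (to_ac a) (to_ac b)) :: (4 \<Rightarrow> 'k::field alg_closure) set)"
  unfolding defined_over_base_def H03_def
  by (rule exI[of _ "vec 1 a b 0"], rule exI[of _ "vec 0 0 0 1"]) (simp add: to_ac_vec)

lemma dob_H03: "a \<in> range to_ac \<Longrightarrow> b \<in> range to_ac \<Longrightarrow> defined_over_base ((H03 a b) :: (4 \<Rightarrow> 'k::field alg_closure) set)"
  by (auto intro!: dob_H030)

definition H12 :: "'a::field \<Rightarrow> 'a::field \<Rightarrow> (4 \<Rightarrow> 'a) set" where
  "H12 a b = span2 (vec 0 1 0 a) (vec 0 0 1 b)"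

lemma mem_H12: "x \<in> (H12 a b) \<longleftrightarrow> x 0 = x 1 * 0 + x 2 * 0 \<and> x 3 = x 1 * a + x 2 * b"
proof
  assume "x \<in> (H12 a b)"
  then obtain s t where "x = vec (s * 0 + t * 0) (s * 1 + t * 0) (s * 0 + t * 1) (s * a + t * b)" unfolding H12_def span2_vec by blast
  then show "x 0 = x 1 * 0 + x 2 * 0 \<and> x 3 = x 1 * a + x 2 * b" by simp
next
  assume h: "x 0 = x 1 * 0 + x 2 * 0 \<and> x 3 = x 1 * a + x 2 * b"
  have "x = vec (x 0) (x 1) (x 2) (x 3)" by (rule fun4_eq)
  also have "\<dots> = vec (x 1 * 0 + x 2 * 0) (x 1 * 1 + x 2 * 0) (x 1 * 0 + x 2 * 1) (x 1 * a + x 2 * b)" using h by simp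
  finally show "x \<in> (H12 a b)" unfolding H12_def span2_vec by blast
qed

lemma H12_inj: "(H12 a b) = (H12 a2 b2) \<longleftrightarrow> a = a2 \<and> b = b2"
proof
  assume e: "(H12 a b) = (H12 a2 b2)"
  have 1: "vec 0 1 0 a \<in> (H12 a2 b2)" unfolding e[symmetric] mem_H12 by simp
  have 2: "vec 0 0 1 b \<in> (H12 a2 b2)" unfolding e[symmetric] mem_H12 by simp
  from 1 2 show "a = a2 \<and> b = b2" unfolding mem_H12 by simp
qed simp

lemma li_H12: "lin_indep2 (vec 0 1 0 a) (vec 0 0 1 b :: 4 \<Rightarrow> 'a::field)"
  unfolding lin_indep2_def
proof (intro allI impI)
  fix s t :: 'a assume h: "\<forall>i. s * vec 0 1 0 a i + t * vec 0 0 1 b i = 0"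
  from h[rule_format, of 1] h[rule_format, of 2] show "s = 0 \<and> t = 0" by simp
qed

lemma isl_H12: "is_line (H12 a b)"
  unfolding is_line_def H12_def using li_H12 by blast

lemma dob_H120: "defined_over_base ((H12 (to_ac a) (to_ac b)) :: (4 \<Rightarrow> 'k::field alg_closure) set)"
  unfolding defined_over_base_def H12_def
  by (rule exI[of _ "vec 0 1 0 a"], rule exI[of _ "vec 0 0 1 b"]) (simp add: to_ac_vec)

lemma dob_H12: "a \<in> range to_ac \<Longrightarrow> b \<in> range to_ac \<Longrightarrow> defined_over_base ((H12 a b) :: (4 \<Rightarrow> 'k::field alg_closure) set)"
  by (auto intro!: dob_H120)

definition H13 :: "'a::field \<Rightarrow> (4 \<Rightarrow> 'a) set" where
  "H13 a = span2 (vec 0 1 a 0) (vec 0 0 0 1)"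

lemma mem_H13: "x \<in> (H13 a) \<longleftrightarrow> x 0 = x 1 * 0 + x 3 * 0 \<and> x 2 = x 1 * a + x 3 * 0"
proof
  assume "x \<in> (H13 a)"
  then obtain s t where "x = vec (s * 0 + t * 0) (s * 1 + t * 0) (s * a + t * 0) (s * 0 + t * 1)" unfolding H13_def span2_vec by blast
  then show "x 0 = x 1 * 0 + x 3 * 0 \<and> x 2 = x 1 * a + x 3 * 0" by simp
next
  assume h: "x 0 = x 1 * 0 + x 3 * 0 \<and> x 2 = x 1 * a + x 3 * 0"
  have "x = vec (x 0) (x 1) (x 2) (x 3)" by (rule fun4_eq)
  also have "\<dots> = vec (x 1 * 0 + x 3 * 0) (x 1 * 1 + x 3 * 0) (x 1 * a + x 3 * 0) (x 1 * 0 + x 3 * 1)" using h by simp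
  finally show "x \<in> (H13 a)" unfolding H13_def span2_vec by blast
qed

lemma H13_inj: "(H13 a) = (H13 a2) \<longleftrightarrow> a = a2"
proof
  assume e: "(H13 a) = (H13 a2)"
  have 1: "vec 0 1 a 0 \<in> (H13 a2)" unfolding e[symmetric] mem_H13 by simp
  have 2: "vec 0 0 0 1 \<in> (H13 a2)" unfolding e[symmetric] mem_H13 by simp
  from 1 2 show "a = a2" unfolding mem_H13 by simp
qed simp

lemma li_H13: "lin_indep2 (vec 0 1 a 0) (vec 0 0 0 1 :: 4 \<Rightarrow> 'a::field)"
  unfolding lin_indep2_def
proof (intro allI impI)
  fix s t :: 'a assume h: "\<forall>i. s * vec 0 1 a 0 i + t * vec 0 0 0 1 i = 0"
  from h[rule_format, of 1] h[rule_format, of 3] show "s = 0 \<and> t = 0" by simp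
qed

lemma isl_H13: "is_line (H13 a)"
  unfolding is_line_def H13_def using li_H13 by blast

lemma dob_H130: "defined_over_base ((H13 (to_ac a)) :: (4 \<Rightarrow> 'k::field alg_closure) set)"
  unfolding defined_over_base_def H13_def
  by (rule exI[of _ "vec 0 1 a 0"], rule exI[of _ "vec 0 0 0 1"]) (simp add: to_ac_vec)

lemma dob_H13: "a \<in> range to_ac \<Longrightarrow> defined_over_base ((H13 a) :: (4 \<Rightarrow> 'k::field alg_closure) set)"
  by (auto intro!: dob_H130)

definition H23 :: "(4 \<Rightarrow> 'a::field) set" where
  "H23 = span2 (vec 0 0 1 0) (vec 0 0 0 1)"

lemma mem_H23: "x \<in> H23 \<longleftrightarrow> x 0 = x 2 * 0 + x 3 * 0 \<and> x 1 = x 2 * 0 + x 3 * 0"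
proof
  assume "x \<in> H23"
  then obtain s t where "x = vec (s * 0 + t * 0) (s * 0 + t * 0) (s * 1 + t * 0) (s * 0 + t * 1)" unfolding H23_def span2_vec by blast
  then show "x 0 = x 2 * 0 + x 3 * 0 \<and> x 1 = x 2 * 0 + x 3 * 0" by simp
next
  assume h: "x 0 = x 2 * 0 + x 3 * 0 \<and> x 1 = x 2 * 0 + x 3 * 0"
  have "x = vec (x 0) (x 1) (x 2) (x 3)" by (rule fun4_eq)
  also have "\<dots> = vec (x 2 * 0 + x 3 * 0) (x 2 * 0 + x 3 * 0) (x 2 * 1 + x 3 * 0) (x 2 * 0 + x 3 * 1)" using h by simp
  finally show "x \<in> H23" unfolding H23_def span2_vec by blast
qed

lemma li_H23: "lin_indep2 (vec 0 0 1 0) (vec 0 0 0 1 :: 4 \<Rightarrow> 'a::field)"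
  unfolding lin_indep2_def
proof (intro allI impI)
  fix s t :: 'a assume h: "\<forall>i. s * vec 0 0 1 0 i + t * vec 0 0 0 1 i = 0"
  from h[rule_format, of 2] h[rule_format, of 3] show "s = 0 \<and> t = 0" by simp
qed

lemma isl_H23: "is_line H23"
  unfolding is_line_def H23_def using li_H23 by blast

lemma dob_H230: "defined_over_base (H23 :: (4 \<Rightarrow> 'k::field alg_closure) set)"
  unfolding defined_over_base_def H23_def
  by (rule exI[of _ "vec 0 0 1 0"], rule exI[of _ "vec 0 0 0 1"]) (simp add: to_ac_vec)

lemmas dob_H23 = dob_H230

lemma ne_G_H02: "(G a b c d) \<noteq> (H02 a2 b2 c2)"
proof
  assume e: "(G a b c d) = (H02 a2 b2 c2)"
  have "vec 0 0 1 c2 \<in> (H02 a2 b2 c2)" unfolding mem_H02 by simp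
  then have "vec 0 0 1 c2 \<in> (G a b c d)" using e by simp
  then show False unfolding mem_G by simp
qed

lemma ne_G_H03: "(G a b c d) \<noteq> (H03 a2 b2)"
proof
  assume e: "(G a b c d) = (H03 a2 b2)"
  have "vec 0 0 0 1 \<in> (H03 a2 b2)" unfolding mem_H03 by simp
  then have "vec 0 0 0 1 \<in> (G a b c d)" using e by simp
  then show False unfolding mem_G by simp
qed

lemma ne_G_H12: "(G a b c d) \<noteq> (H12 a2 b2)"
proof
  assume e: "(G a b c d) = (H12 a2 b2)"
  have "vec 0 0 1 b2 \<in> (H12 a2 b2)" unfolding mem_H12 by simp
  then have "vec 0 0 1 b2 \<in> (G a b c d)" using e by simp
  then show False unfolding mem_G by simp
qed

lemma ne_G_H13: "(G a b c d) \<noteq> (H13 a2)"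
proof
  assume e: "(G a b c d) = (H13 a2)"
  have "vec 0 0 0 1 \<in> (H13 a2)" unfolding mem_H13 by simp
  then have "vec 0 0 0 1 \<in> (G a b c d)" using e by simp
  then show False unfolding mem_G by simp
qed

lemma ne_G_H23: "(G a b c d) \<noteq> H23"
proof
  assume e: "(G a b c d) = H23"
  have "vec 0 0 1 0 \<in> H23" unfolding mem_H23 by simp
  then have "vec 0 0 1 0 \<in> (G a b c d)" using e by simp
  then show False unfolding mem_G by simp
qed

lemma ne_H02_H03: "(H02 a b c) \<noteq> (H03 a2 b2)"
proof
  assume e: "(H02 a b c) = (H03 a2 b2)"
  have "vec 0 0 0 1 \<in> (H03 a2 b2)" unfolding mem_H03 by simp
  then have "vec 0 0 0 1 \<in> (H02 a b c)" using e by simp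
  then show False unfolding mem_H02 by simp
qed

lemma ne_H02_H12: "(H02 a b c) \<noteq> (H12 a2 b2)"
proof
  assume e: "(H02 a b c) = (H12 a2 b2)"
  have "vec 1 a 0 b \<in> (H02 a b c)" unfolding mem_H02 by simp
  then have "vec 1 a 0 b \<in> (H12 a2 b2)" using e by simp
  then show False unfolding mem_H12 by simp
qed

lemma ne_H02_H13: "(H02 a b c) \<noteq> (H13 a2)"
proof
  assume e: "(H02 a b c) = (H13 a2)"
  have "vec 1 a 0 b \<in> (H02 a b c)" unfolding mem_H02 by simp
  then have "vec 1 a 0 b \<in> (H13 a2)" using e by simp
  then show False unfolding mem_H13 by simp
qed

lemma ne_H02_H23: "(H02 a b c) \<noteq> H23"
proof
  assume e: "(H02 a b c) = H23"
  have "vec 1 a 0 b \<in> (H02 a b c)" unfolding mem_H02 by simp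
  then have "vec 1 a 0 b \<in> H23" using e by simp
  then show False unfolding mem_H23 by simp
qed

lemma ne_H03_H12: "(H03 a b) \<noteq> (H12 a2 b2)"
proof
  assume e: "(H03 a b) = (H12 a2 b2)"
  have "vec 1 a b 0 \<in> (H03 a b)" unfolding mem_H03 by simp
  then have "vec 1 a b 0 \<in> (H12 a2 b2)" using e by simp
  then show False unfolding mem_H12 by simp
qed

lemma ne_H03_H13: "(H03 a b) \<noteq> (H13 a2)"
proof
  assume e: "(H03 a b) = (H13 a2)"
  have "vec 1 a b 0 \<in> (H03 a b)" unfolding mem_H03 by simp
  then have "vec 1 a b 0 \<in> (H13 a2)" using e by simp
  then show False unfolding mem_H13 by simp
qed

lemma ne_H03_H23: "(H03 a b) \<noteq> H23"
proof
  assume e: "(H03 a b) = H23"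
  have "vec 1 a b 0 \<in> (H03 a b)" unfolding mem_H03 by simp
  then have "vec 1 a b 0 \<in> H23" using e by simp
  then show False unfolding mem_H23 by simp
qed

lemma ne_H12_H13: "(H12 a b) \<noteq> (H13 a2)"
proof
  assume e: "(H12 a b) = (H13 a2)"
  have "vec 0 0 0 1 \<in> (H13 a2)" unfolding mem_H13 by simp
  then have "vec 0 0 0 1 \<in> (H12 a b)" using e by simp
  then show False unfolding mem_H12 by simp
qed

lemma ne_H12_H23: "(H12 a b) \<noteq> H23"
proof
  assume e: "(H12 a b) = H23"
  have "vec 0 1 0 a \<in> (H12 a b)" unfolding mem_H12 by simp
  then have "vec 0 1 0 a \<in> H23" using e by simp
  then show False unfolding mem_H23 by simp
qed

lemma ne_H13_H23: "(H13 a) \<noteq> H23"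
proof
  assume e: "(H13 a) = H23"
  have "vec 0 1 a 0 \<in> (H13 a)" unfolding mem_H13 by simp
  then have "vec 0 1 a 0 \<in> H23" using e by simp
  then show False unfolding mem_H23 by simp
qed

lemmas cross_ne = ne_G_H02 ne_G_H03 ne_G_H12 ne_G_H13 ne_G_H23 ne_H02_H03 ne_H02_H12 ne_H02_H13 ne_H02_H23 ne_H03_H12 ne_H03_H13 ne_H03_H23 ne_H12_H13 ne_H12_H23 ne_H13_H23


lemma rng_0: "0 \<in> range to_ac" by (metis rangeI to_ac_0)
lemma rng_1: "1 \<in> range to_ac" by (metis rangeI to_ac_1)
lemma rng_add: assumes "x \<in> range to_ac" "y \<in> range to_ac" shows "x + y \<in> range to_ac"
proof -
  obtain a b where "x = to_ac a" "y = to_ac b" using assms by blast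
  then have "x + y = to_ac (a + b)" by simp
  then show ?thesis by blast
qed
lemma rng_pow: assumes "x \<in> range to_ac" shows "x ^ n \<in> range to_ac"
proof -
  obtain a where "x = to_ac a" using assms by blast
  then have "x ^ n = to_ac (a ^ n)" by simp
  then show ?thesis by blast
qed

section \<open>Normal form of lines\<close>

definition mnr :: "(4 \<Rightarrow> 'a::field) \<Rightarrow> (4 \<Rightarrow> 'a) \<Rightarrow> 4 \<Rightarrow> 4 \<Rightarrow> 'a" where
  "mnr u v i j = u i * v j - u j * v i"
definition pp :: "(4 \<Rightarrow> 'a::field) \<Rightarrow> (4 \<Rightarrow> 'a) \<Rightarrow> 4 \<Rightarrow> 4 \<Rightarrow> 4 \<Rightarrow> 'a" where
  "pp u v i j = (\<lambda>k. (v j * u k - u j * v k) / mnr u v i j)"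
definition qq :: "(4 \<Rightarrow> 'a::field) \<Rightarrow> (4 \<Rightarrow> 'a) \<Rightarrow> 4 \<Rightarrow> 4 \<Rightarrow> 4 \<Rightarrow> 'a" where
  "qq u v i j = (\<lambda>k. (u i * v k - v i * u k) / mnr u v i j)"

lemma pq_vals: assumes M: "mnr u v i j \<noteq> 0"
  shows "pp u v i j i = 1" "pp u v i j j = 0" "qq u v i j i = 0" "qq u v i j j = 1"
proof -
  have e1: "v j * u i - u j * v i = mnr u v i j" by (simp add: mnr_def algebra_simps)
  have e2: "u i * v j - v i * u j = mnr u v i j" by (simp add: mnr_def algebra_simps)
  have e3: "v j * u j - u j * v j = 0" by (simp add: algebra_simps)
  have e4: "u i * v i - v i * u i = 0" by (simp add: algebra_simps)
  show "pp u v i j i = 1" using M by (simp add: pp_def e1)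
  show "pp u v i j j = 0" by (simp add: pp_def e3)
  show "qq u v i j i = 0" by (simp add: qq_def e4)
  show "qq u v i j j = 1" using M by (simp add: qq_def e2)
qed

lemma frac4: "(A/M)*(B/M) - (C/M)*(D/M) = (A*B - C*D)/(M*(M::'a::field))"
  by (simp add: times_divide_times_eq diff_divide_distrib)

lemma frac2: "a*(x/M) + b*(y/M) = (a*x + b*y)/(M::'a::field)"
  by (cases "M = 0") (simp_all add: field_simps)

lemma frac3: "(a*x - b*y)/M = (a/M)*x + (-b/M)*(y::'a::field)"
  by (cases "M = 0") (simp_all add: field_simps)

lemma frac3': "(a*x - b*y)/M = (-b/M)*y + (a/M)*(x::'a::field)"
  by (cases "M = 0") (simp_all add: field_simps)

lemma pq_mnr: assumes M: "mnr u v i j \<noteq> 0"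
  shows "mnr (pp u v i j) (qq u v i j) k l = mnr u v k l / mnr u v i j"
proof -
  have num: "(v j * u k - u j * v k) * (u i * v l - v i * u l) - (v j * u l - u j * v l) * (u i * v k - v i * u k)
      = mnr u v i j * mnr u v k l" by (simp add: mnr_def algebra_simps)
  have "mnr (pp u v i j) (qq u v i j) k l = ((v j * u k - u j * v k) * (u i * v l - v i * u l) - (v j * u l - u j * v l) * (u i * v k - v i * u k)) / (mnr u v i j * mnr u v i j)"
    unfolding mnr_def pp_def qq_def by (rule frac4)
  also have "\<dots> = (mnr u v i j * mnr u v k l) / (mnr u v i j * mnr u v i j)" by (simp only: num)
  also have "\<dots> = mnr u v k l / mnr u v i j" using M by simp
  finally show ?thesis .
qed

lemma span2_sub:
  assumes u': "\<exists>s t. u' = (\<lambda>k. s * u k + t * v k)" and v': "\<exists>s t. v' = (\<lambda>k. s * u k + t * v k)"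
  shows "span2 u' v' \<subseteq> span2 u v"
proof
  fix x assume "x \<in> span2 u' v'"
  then obtain s t where x: "x = (\<lambda>k. s * u' k + t * v' k)" by (auto simp: span2_def)
  obtain s1 t1 where u'': "u' = (\<lambda>k. s1 * u k + t1 * v k)" using u' by blast
  obtain s2 t2 where v'': "v' = (\<lambda>k. s2 * u k + t2 * v k)" using v' by blast
  have "x = (\<lambda>k. (s*s1 + t*s2) * u k + (s*t1 + t*t2) * v k)"
    unfolding x u'' v'' by (simp add: algebra_simps)
  then show "x \<in> span2 u v" by (auto simp: span2_def)
qed

lemma pq_span: assumes M: "mnr u v i j \<noteq> 0"
  shows "span2 u v = span2 (pp u v i j) (qq u v i j)"
proof
  have M': "u i * v j - u j * v i \<noteq> 0" using M by (simp add: mnr_def)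
  have hu: "\<And>k. u i * pp u v i j k + u j * qq u v i j k = u k"
  proof -
    fix k
    have n: "u i * (v j * u k - u j * v k) + u j * (u i * v k - v i * u k) = u k * mnr u v i j"
      by (simp add: mnr_def algebra_simps)
    have "u i * pp u v i j k + u j * qq u v i j k = (u i * (v j * u k - u j * v k) + u j * (u i * v k - v i * u k)) / mnr u v i j"
      unfolding pp_def qq_def by (rule frac2)
    also have "\<dots> = (u k * mnr u v i j) / mnr u v i j" by (simp only: n)
    also have "\<dots> = u k" using M by simp
    finally show "u i * pp u v i j k + u j * qq u v i j k = u k" .
  qed
  have hv: "\<And>k. v i * pp u v i j k + v j * qq u v i j k = v k"
  proof -
    fix k
    have n: "v i * (v j * u k - u j * v k) + v j * (u i * v k - v i * u k) = v k * mnr u v i j"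
      by (simp add: mnr_def algebra_simps)
    have "v i * pp u v i j k + v j * qq u v i j k = (v i * (v j * u k - u j * v k) + v j * (u i * v k - v i * u k)) / mnr u v i j"
      unfolding pp_def qq_def by (rule frac2)
    also have "\<dots> = (v k * mnr u v i j) / mnr u v i j" by (simp only: n)
    also have "\<dots> = v k" using M by simp
    finally show "v i * pp u v i j k + v j * qq u v i j k = v k" .
  qed
  show "span2 u v \<subseteq> span2 (pp u v i j) (qq u v i j)"
  proof (rule span2_sub)
    show "\<exists>s t. u = (\<lambda>k. s * pp u v i j k + t * qq u v i j k)"
      by (rule exI[of _ "u i"], rule exI[of _ "u j"]) (simp add: hu)
    show "\<exists>s t. v = (\<lambda>k. s * pp u v i j k + t * qq u v i j k)"
      by (rule exI[of _ "v i"], rule exI[of _ "v j"]) (simp add: hv)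
  qed
  show "span2 (pp u v i j) (qq u v i j) \<subseteq> span2 u v"
  proof (rule span2_sub)
    show "\<exists>s t. pp u v i j = (\<lambda>k. s * u k + t * v k)"
      by (rule exI[of _ "v j / mnr u v i j"], rule exI[of _ "- u j / mnr u v i j"])
         (simp add: pp_def frac3)
    show "\<exists>s t. qq u v i j = (\<lambda>k. s * u k + t * v k)"
      by (rule exI[of _ "- v i / mnr u v i j"], rule exI[of _ "u i / mnr u v i j"])
         (simp add: qq_def frac3')
  qed
qed

lemma dep:
  assumes z: "mnr u v 0 1 = 0" "mnr u v 0 2 = 0" "mnr u v 0 3 = 0" "mnr u v 1 2 = 0" "mnr u v 1 3 = 0" "mnr u v 2 3 = 0"
  shows "\<not> lin_indep2 u v"
proof
  assume li: "lin_indep2 u v"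
  have a: "\<And>k l. mnr u v k l = - mnr u v l k" "\<And>k. mnr u v k k = 0" by (simp_all add: mnr_def)
  have zz: "\<forall>i k. mnr u v i k = 0"
    using z a(1)[of 1 0] a(1)[of 2 0] a(1)[of 3 0] a(1)[of 2 1] a(1)[of 3 1] a(1)[of 3 2] a(2)
    by (simp add: all4)
  show False
  proof (cases "\<exists>i. v i \<noteq> 0")
    case True
    then obtain i where vi: "v i \<noteq> 0" by blast
    have "\<forall>k. v i * u k + (- u i) * v k = 0"
    proof
      fix k
      have "v i * u k + (- u i) * v k = - mnr u v i k" by (simp add: mnr_def algebra_simps)
      then show "v i * u k + (- u i) * v k = 0" using zz by simp
    qed
    then show False using li vi unfolding lin_indep2_def by blast
  next
    case False
    then have "\<forall>k. 0 * u k + 1 * v k = 0" by simp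
    then have "(0::'a) = 0 \<and> (1::'a) = 0" using li unfolding lin_indep2_def by blast
    then show False by simp
  qed
qed
definition L27gen :: "'a::field \<Rightarrow> 'a::field \<Rightarrow> 'a::field \<Rightarrow> 'a::field \<Rightarrow> 'a::field \<Rightarrow> 'a::field \<Rightarrow> 'a::field \<Rightarrow> 'a::field \<Rightarrow> (4 \<Rightarrow> 'a) set list" where
  "L27gen v0 v1 v2 v3 v4 v5 v6 v7 = [G v0 v5 v2 v0, G v0 v5 v2 v5, G v5 v0 v0 v2, G v5 v0 v5 v2, G v5 v5 v0 v5, G v5 v5 v5 v0, G v0 v6 v3 v0, G v0 v6 v3 v6, G v6 v0 v0 v3, G v6 v0 v6 v3, G v6 v6 v0 v6, G v6 v6 v6 v0, G v0 v7 v4 v0, G v0 v7 v4 v7, G v7 v0 v0 v4, G v7 v0 v7 v4, G v7 v7 v0 v7, G v7 v7 v7 v0, H02 v0 v0 v0, H02 v0 v0 v1, H02 v1 v0 v0, H02 v1 v1 v1, H03 v0 v0, H03 v1 v0, H12 v0 v0, H12 v1 v1, H13 v0]"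

lemma L27gen_distinct:
  assumes "v0 \<noteq> v1" "v0 \<noteq> v2" "v0 \<noteq> v3" "v0 \<noteq> v4" "v0 \<noteq> v5" "v0 \<noteq> v6" "v0 \<noteq> v7" "v1 \<noteq> v0" "v1 \<noteq> v2" "v1 \<noteq> v3" "v1 \<noteq> v4" "v1 \<noteq> v5" "v1 \<noteq> v6" "v1 \<noteq> v7" "v2 \<noteq> v0" "v2 \<noteq> v1" "v2 \<noteq> v3" "v2 \<noteq> v4" "v2 \<noteq> v5" "v2 \<noteq> v6" "v2 \<noteq> v7" "v3 \<noteq> v0" "v3 \<noteq> v1" "v3 \<noteq> v2" "v3 \<noteq> v4" "v3 \<noteq> v5" "v3 \<noteq> v6" "v3 \<noteq> v7" "v4 \<noteq> v0" "v4 \<noteq> v1" "v4 \<noteq> v2" "v4 \<noteq> v3" "v4 \<noteq> v5" "v4 \<noteq> v6" "v4 \<noteq> v7" "v5 \<noteq> v0" "v5 \<noteq> v1" "v5 \<noteq> v2" "v5 \<noteq> v3" "v5 \<noteq> v4" "v5 \<noteq> v6" "v5 \<noteq> v7" "v6 \<noteq> v0" "v6 \<noteq> v1" "v6 \<noteq> v2" "v6 \<noteq> v3" "v6 \<noteq> v4" "v6 \<noteq> v5" "v6 \<noteq> v7" "v7 \<noteq> v0" "v7 \<noteq> v1" "v7 \<noteq> v2" "v7 \<noteq> v3" "v7 \<noteq> v4" "v7 \<noteq> v5" "v7 \<noteq> v6"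
  shows "distinct (L27gen v0 v1 v2 v3 v4 v5 v6 v7)"
  using assms by (simp add: L27gen_def G_inj H02_inj H03_inj H12_inj H13_inj cross_ne cross_ne[THEN not_sym])

lemma L27gen_len: "length (L27gen v0 v1 v2 v3 v4 v5 v6 v7) = 27" by (simp add: L27gen_def)

lemma G_Pp: "P (vec 1 0 a b) = (a*a*b + a*b*b)" by (simp add: P_def algebra_simps power2_eq_square power3_eq_cube)
lemma G_Pq: "P (vec 0 1 c d) = (c*c*d + c*d*d + c*d)" by (simp add: P_def algebra_simps power2_eq_square power3_eq_cube)
lemma G_Bpq: "Bc (vec 1 0 a b) (vec 0 1 c d) = (a*a*d + 2*a*b*c + 2*a*b*d + a*b + b*b*c + 1)" by (simp add: Bc_def algebra_simps power2_eq_square power3_eq_cube)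
lemma G_Bqp: "Bc (vec 0 1 c d) (vec 1 0 a b) = (2*a*c*d + a*d*d + a*d + b*c*c + 2*b*c*d + b*c + 1)" by (simp add: Bc_def algebra_simps power2_eq_square power3_eq_cube)

lemma H02_Pp: "P (vec 1 a 0 b) = (a*a + a)" by (simp add: P_def algebra_simps power2_eq_square power3_eq_cube)
lemma H02_Pq: "P (vec 0 0 1 c) = (c*c + c)" by (simp add: P_def algebra_simps power2_eq_square power3_eq_cube)
lemma H02_Bpq: "Bc (vec 1 a 0 b) (vec 0 0 1 c) = (a*b + b*b)" by (simp add: Bc_def algebra_simps power2_eq_square power3_eq_cube)
lemma H02_Bqp: "Bc (vec 0 0 1 c) (vec 1 a 0 b) = (a*c + 2*b*c + b)" by (simp add: Bc_def algebra_simps power2_eq_square power3_eq_cube)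

lemma H03_Pp: "P (vec 1 a b 0) = (a*a + a)" by (simp add: P_def algebra_simps power2_eq_square power3_eq_cube)
lemma H03_Pq: "P (vec 0 0 0 1) = 0" by (simp add: P_def algebra_simps power2_eq_square power3_eq_cube)
lemma H03_Bpq: "Bc (vec 1 a b 0) (vec 0 0 0 1) = (a*b + b*b)" by (simp add: Bc_def algebra_simps power2_eq_square power3_eq_cube)
lemma H03_Bqp: "Bc (vec 0 0 0 1) (vec 1 a b 0) = (b)" by (simp add: Bc_def algebra_simps power2_eq_square power3_eq_cube)

lemma H12_Pp: "P (vec 0 1 0 a) = 0" by (simp add: P_def algebra_simps power2_eq_square power3_eq_cube)
lemma H12_Pq: "P (vec 0 0 1 b) = (b*b + b)" by (simp add: P_def algebra_simps power2_eq_square power3_eq_cube)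
lemma H12_Bpq: "Bc (vec 0 1 0 a) (vec 0 0 1 b) = (a*a + a)" by (simp add: Bc_def algebra_simps power2_eq_square power3_eq_cube)
lemma H12_Bqp: "Bc (vec 0 0 1 b) (vec 0 1 0 a) = (2*a*b + a + b)" by (simp add: Bc_def algebra_simps power2_eq_square power3_eq_cube)

lemma H13_Pp: "P (vec 0 1 a 0) = 0" by (simp add: P_def algebra_simps power2_eq_square power3_eq_cube)
lemma H13_Pq: "P (vec 0 0 0 1) = 0" by (simp add: P_def algebra_simps power2_eq_square power3_eq_cube)
lemma H13_Bpq: "Bc (vec 0 1 a 0) (vec 0 0 0 1) = (a*a + a)" by (simp add: Bc_def algebra_simps power2_eq_square power3_eq_cube)
lemma H13_Bqp: "Bc (vec 0 0 0 1) (vec 0 1 a 0) = (a)" by (simp add: Bc_def algebra_simps power2_eq_square power3_eq_cube)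

lemma H23_Pp: "P (vec 0 0 1 0) = 0" by (simp add: P_def algebra_simps power2_eq_square power3_eq_cube)
lemma H23_Pq: "P (vec 0 0 0 1) = 0" by (simp add: P_def algebra_simps power2_eq_square power3_eq_cube)
lemma H23_Bpq: "Bc (vec 0 0 1 0) (vec 0 0 0 1) = (1)" by (simp add: Bc_def algebra_simps power2_eq_square power3_eq_cube)
lemma H23_Bqp: "Bc (vec 0 0 0 1) (vec 0 0 1 0) = (1)" by (simp add: Bc_def algebra_simps power2_eq_square power3_eq_cube)

locale F8 =
  fixes \<alpha> :: "'a::field"
  assumes two: "(2::'a) = 0" and root: "\<alpha>^3 + \<alpha> + 1 = 0"
begin

lemma al_nz: "\<alpha> \<noteq> 0"
proof
  assume h: "\<alpha> = 0"
  have "(1::'a) = 0" by (rule cert2[where hA="(\<alpha>*\<alpha> + 1)" and hB="(1)" and k="(-\<alpha>*\<alpha>*\<alpha> - \<alpha>)", OF _ h root two]) (simp add: algebra_simps power2_eq_square power3_eq_cube)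
  then show False by simp
qed

lemma al_n1: "\<alpha> \<noteq> 1"
proof
  assume h0: "\<alpha> = 1"
  then have h: "\<alpha> - 1 = 0" by (rule iffD2[OF right_minus_eq])
  have "(1::'a) = 0" by (rule cert2[where hA="(\<alpha>*\<alpha> + \<alpha>)" and hB="(1)" and k="(-\<alpha>*\<alpha>*\<alpha>)", OF _ h root two]) (simp add: algebra_simps power2_eq_square power3_eq_cube)
  then show False by simp
qed

lemma rt: assumes h: "c^3 + c + 1 = 0" shows "c = \<alpha> \<or> c = \<alpha>^2 \<or> c = \<alpha>^2 + \<alpha>"
proof -
  have "(c + \<alpha>) * (c + \<alpha>^2) * (c + (\<alpha>^2 + \<alpha>)) = 0"
    by (rule cert2[where hA="(1)" and hB="(\<alpha>*\<alpha> + \<alpha>*c + \<alpha> + c + 1)" and k="(\<alpha>*\<alpha>*\<alpha>*c - \<alpha>*\<alpha>*\<alpha> + \<alpha>*\<alpha>*c*c - \<alpha>*\<alpha> + \<alpha>*c*c - \<alpha>*c - \<alpha> - c - 1)", OF _ h root two]) (simp add: algebra_simps power2_eq_square power3_eq_cube)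
  then have "c + \<alpha> = 0 \<or> c + \<alpha>^2 = 0 \<or> c + (\<alpha>^2 + \<alpha>) = 0" by (metis mult_eq_0_iff)
  then show ?thesis using c2eq[OF two] by blast
qed

lemma rB: "(\<alpha>^2)^3 + \<alpha>^2 + 1 = 0"
  by (rule cert1[where hA="(\<alpha>*\<alpha>*\<alpha> + \<alpha> + 1)" and k="(-\<alpha>*\<alpha>*\<alpha>*\<alpha> - \<alpha>*\<alpha>*\<alpha> - \<alpha>)", OF _ root two]) (simp add: algebra_simps power2_eq_square power3_eq_cube)
lemma rC: "(\<alpha>^2 + \<alpha>)^3 + (\<alpha>^2 + \<alpha>) + 1 = 0"
  by (rule cert1[where hA="(\<alpha>*\<alpha>*\<alpha> + \<alpha>*\<alpha> + 1)" and k="(\<alpha>*\<alpha>*\<alpha>*\<alpha>*\<alpha> + \<alpha>*\<alpha>*\<alpha>*\<alpha> - \<alpha>*\<alpha>*\<alpha>)", OF _ root two]) (simp add: algebra_simps power2_eq_square power3_eq_cube)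

lemma dd_0_1: "(0::'a) \<noteq> 1"
proof
  assume h0: "(0::'a) = 1"
  then have h: "(0::'a) - (1) = 0" by (rule iffD2[OF right_minus_eq])
  have "(1::'a) = 0" by (rule cert2[where hA="(1)" and hB="0" and k="(1)", OF _ h root two]) (simp add: algebra_simps power2_eq_square power3_eq_cube)
  then show False by simp
qed

lemma dd_0_2: "(0::'a) \<noteq> \<alpha>"
proof
  assume h0: "(0::'a) = \<alpha>"
  then have h: "(0::'a) - (\<alpha>) = 0" by (rule iffD2[OF right_minus_eq])
  have "(1::'a) = 0" by (rule cert2[where hA="(\<alpha>*\<alpha> + 1)" and hB="(1)" and k="0", OF _ h root two]) (simp add: algebra_simps power2_eq_square power3_eq_cube)
  then show False by simp
qed

lemma dd_0_3: "(0::'a) \<noteq> \<alpha>^2"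
proof
  assume h0: "(0::'a) = \<alpha>^2"
  then have h: "(0::'a) - (\<alpha>^2) = 0" by (rule iffD2[OF right_minus_eq])
  have "(1::'a) = 0" by (rule cert2[where hA="(\<alpha>*\<alpha> + \<alpha> + 1)" and hB="(\<alpha> + 1)" and k="(-\<alpha>)", OF _ h root two]) (simp add: algebra_simps power2_eq_square power3_eq_cube)
  then show False by simp
qed

lemma dd_0_4: "(0::'a) \<noteq> \<alpha>^2 + \<alpha>"
proof
  assume h0: "(0::'a) = \<alpha>^2 + \<alpha>"
  then have h: "(0::'a) - (\<alpha>^2 + \<alpha>) = 0" by (rule iffD2[OF right_minus_eq])
  have "(1::'a) = 0" by (rule cert2[where hA="(\<alpha> + 1)" and hB="(1)" and k="(\<alpha>*\<alpha>)", OF _ h root two]) (simp add: algebra_simps power2_eq_square power3_eq_cube)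
  then show False by simp
qed

lemma dd_0_5: "(0::'a) \<noteq> 1 + \<alpha>"
proof
  assume h0: "(0::'a) = 1 + \<alpha>"
  then have h: "(0::'a) - (1 + \<alpha>) = 0" by (rule iffD2[OF right_minus_eq])
  have "(1::'a) = 0" by (rule cert2[where hA="(\<alpha>*\<alpha> + \<alpha>)" and hB="(1)" and k="(\<alpha>*\<alpha>)", OF _ h root two]) (simp add: algebra_simps power2_eq_square power3_eq_cube)
  then show False by simp
qed

lemma dd_0_6: "(0::'a) \<noteq> 1 + \<alpha>^2"
proof
  assume h0: "(0::'a) = 1 + \<alpha>^2"
  then have h: "(0::'a) - (1 + \<alpha>^2) = 0" by (rule iffD2[OF right_minus_eq])
  have "(1::'a) = 0" by (rule cert2[where hA="(\<alpha>)" and hB="(1)" and k="0", OF _ h root two]) (simp add: algebra_simps power2_eq_square power3_eq_cube)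
  then show False by simp
qed

lemma dd_0_7: "(0::'a) \<noteq> 1 + (\<alpha>^2 + \<alpha>)"
proof
  assume h0: "(0::'a) = 1 + (\<alpha>^2 + \<alpha>)"
  then have h: "(0::'a) - (1 + (\<alpha>^2 + \<alpha>)) = 0" by (rule iffD2[OF right_minus_eq])
  have "(1::'a) = 0" by (rule cert2[where hA="(\<alpha>*\<alpha>)" and hB="(\<alpha> + 1)" and k="(-\<alpha>)", OF _ h root two]) (simp add: algebra_simps power2_eq_square power3_eq_cube)
  then show False by simp
qed

lemma dd_1_2: "(1::'a) \<noteq> \<alpha>"
proof
  assume h0: "(1::'a) = \<alpha>"
  then have h: "(1::'a) - (\<alpha>) = 0" by (rule iffD2[OF right_minus_eq])
  have "(1::'a) = 0" by (rule cert2[where hA="(\<alpha>*\<alpha> + \<alpha>)" and hB="(1)" and k="(-\<alpha>)", OF _ h root two]) (simp add: algebra_simps power2_eq_square power3_eq_cube)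
  then show False by simp
qed

lemma dd_1_3: "(1::'a) \<noteq> \<alpha>^2"
proof
  assume h0: "(1::'a) = \<alpha>^2"
  then have h: "(1::'a) - (\<alpha>^2) = 0" by (rule iffD2[OF right_minus_eq])
  have "(1::'a) = 0" by (rule cert2[where hA="(\<alpha>)" and hB="(1)" and k="(-\<alpha>)", OF _ h root two]) (simp add: algebra_simps power2_eq_square power3_eq_cube)
  then show False by simp
qed

lemma dd_1_4: "(1::'a) \<noteq> \<alpha>^2 + \<alpha>"
proof
  assume h0: "(1::'a) = \<alpha>^2 + \<alpha>"
  then have h: "(1::'a) - (\<alpha>^2 + \<alpha>) = 0" by (rule iffD2[OF right_minus_eq])
  have "(1::'a) = 0" by (rule cert2[where hA="(\<alpha>*\<alpha>)" and hB="(\<alpha> + 1)" and k="(-\<alpha>*\<alpha> - \<alpha>)", OF _ h root two]) (simp add: algebra_simps power2_eq_square power3_eq_cube)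
  then show False by simp
qed

lemma dd_1_5: "(1::'a) \<noteq> 1 + \<alpha>"
proof
  assume h0: "(1::'a) = 1 + \<alpha>"
  then have h: "(1::'a) - (1 + \<alpha>) = 0" by (rule iffD2[OF right_minus_eq])
  have "(1::'a) = 0" by (rule cert2[where hA="(\<alpha>*\<alpha> + 1)" and hB="(1)" and k="0", OF _ h root two]) (simp add: algebra_simps power2_eq_square power3_eq_cube)
  then show False by simp
qed

lemma dd_1_6: "(1::'a) \<noteq> 1 + \<alpha>^2"
proof
  assume h0: "(1::'a) = 1 + \<alpha>^2"
  then have h: "(1::'a) - (1 + \<alpha>^2) = 0" by (rule iffD2[OF right_minus_eq])
  have "(1::'a) = 0" by (rule cert2[where hA="(\<alpha>*\<alpha> + \<alpha> + 1)" and hB="(\<alpha> + 1)" and k="(-\<alpha>)", OF _ h root two]) (simp add: algebra_simps power2_eq_square power3_eq_cube)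
  then show False by simp
qed

lemma dd_1_7: "(1::'a) \<noteq> 1 + (\<alpha>^2 + \<alpha>)"
proof
  assume h0: "(1::'a) = 1 + (\<alpha>^2 + \<alpha>)"
  then have h: "(1::'a) - (1 + (\<alpha>^2 + \<alpha>)) = 0" by (rule iffD2[OF right_minus_eq])
  have "(1::'a) = 0" by (rule cert2[where hA="(\<alpha> + 1)" and hB="(1)" and k="(\<alpha>*\<alpha>)", OF _ h root two]) (simp add: algebra_simps power2_eq_square power3_eq_cube)
  then show False by simp
qed

lemma dd_2_3: "(\<alpha>::'a) \<noteq> \<alpha>^2"
proof
  assume h0: "(\<alpha>::'a) = \<alpha>^2"
  then have h: "(\<alpha>::'a) - (\<alpha>^2) = 0" by (rule iffD2[OF right_minus_eq])
  have "(1::'a) = 0" by (rule cert2[where hA="(\<alpha> + 1)" and hB="(1)" and k="(-\<alpha>)", OF _ h root two]) (simp add: algebra_simps power2_eq_square power3_eq_cube)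
  then show False by simp
qed

lemma dd_2_4: "(\<alpha>::'a) \<noteq> \<alpha>^2 + \<alpha>"
proof
  assume h0: "(\<alpha>::'a) = \<alpha>^2 + \<alpha>"
  then have h: "(\<alpha>::'a) - (\<alpha>^2 + \<alpha>) = 0" by (rule iffD2[OF right_minus_eq])
  have "(1::'a) = 0" by (rule cert2[where hA="(\<alpha>*\<alpha> + \<alpha> + 1)" and hB="(\<alpha> + 1)" and k="(-\<alpha>)", OF _ h root two]) (simp add: algebra_simps power2_eq_square power3_eq_cube)
  then show False by simp
qed

lemma dd_2_5: "(\<alpha>::'a) \<noteq> 1 + \<alpha>"
proof
  assume h0: "(\<alpha>::'a) = 1 + \<alpha>"
  then have h: "(\<alpha>::'a) - (1 + \<alpha>) = 0" by (rule iffD2[OF right_minus_eq])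
  have "(1::'a) = 0" by (rule cert2[where hA="(1)" and hB="0" and k="(1)", OF _ h root two]) (simp add: algebra_simps power2_eq_square power3_eq_cube)
  then show False by simp
qed

lemma dd_2_6: "(\<alpha>::'a) \<noteq> 1 + \<alpha>^2"
proof
  assume h0: "(\<alpha>::'a) = 1 + \<alpha>^2"
  then have h: "(\<alpha>::'a) - (1 + \<alpha>^2) = 0" by (rule iffD2[OF right_minus_eq])
  have "(1::'a) = 0" by (rule cert2[where hA="(\<alpha>*\<alpha>)" and hB="(\<alpha> + 1)" and k="(-\<alpha>*\<alpha>*\<alpha> - \<alpha>)", OF _ h root two]) (simp add: algebra_simps power2_eq_square power3_eq_cube)
  then show False by simp
qed

lemma dd_2_7: "(\<alpha>::'a) \<noteq> 1 + (\<alpha>^2 + \<alpha>)"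
proof
  assume h0: "(\<alpha>::'a) = 1 + (\<alpha>^2 + \<alpha>)"
  then have h: "(\<alpha>::'a) - (1 + (\<alpha>^2 + \<alpha>)) = 0" by (rule iffD2[OF right_minus_eq])
  have "(1::'a) = 0" by (rule cert2[where hA="(\<alpha>)" and hB="(1)" and k="0", OF _ h root two]) (simp add: algebra_simps power2_eq_square power3_eq_cube)
  then show False by simp
qed

lemma dd_3_4: "(\<alpha>^2::'a) \<noteq> \<alpha>^2 + \<alpha>"
proof
  assume h0: "(\<alpha>^2::'a) = \<alpha>^2 + \<alpha>"
  then have h: "(\<alpha>^2::'a) - (\<alpha>^2 + \<alpha>) = 0" by (rule iffD2[OF right_minus_eq])
  have "(1::'a) = 0" by (rule cert2[where hA="(\<alpha>*\<alpha> + 1)" and hB="(1)" and k="0", OF _ h root two]) (simp add: algebra_simps power2_eq_square power3_eq_cube)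
  then show False by simp
qed

lemma dd_3_5: "(\<alpha>^2::'a) \<noteq> 1 + \<alpha>"
proof
  assume h0: "(\<alpha>^2::'a) = 1 + \<alpha>"
  then have h: "(\<alpha>^2::'a) - (1 + \<alpha>) = 0" by (rule iffD2[OF right_minus_eq])
  have "(1::'a) = 0" by (rule cert2[where hA="(\<alpha>*\<alpha>)" and hB="(\<alpha> + 1)" and k="(-\<alpha>*\<alpha>*\<alpha>*\<alpha> - \<alpha>)", OF _ h root two]) (simp add: algebra_simps power2_eq_square power3_eq_cube)
  then show False by simp
qed

lemma dd_3_6: "(\<alpha>^2::'a) \<noteq> 1 + \<alpha>^2"
proof
  assume h0: "(\<alpha>^2::'a) = 1 + \<alpha>^2"
  then have h: "(\<alpha>^2::'a) - (1 + \<alpha>^2) = 0" by (rule iffD2[OF right_minus_eq])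
  have "(1::'a) = 0" by (rule cert2[where hA="(1)" and hB="0" and k="(1)", OF _ h root two]) (simp add: algebra_simps power2_eq_square power3_eq_cube)
  then show False by simp
qed

lemma dd_3_7: "(\<alpha>^2::'a) \<noteq> 1 + (\<alpha>^2 + \<alpha>)"
proof
  assume h0: "(\<alpha>^2::'a) = 1 + (\<alpha>^2 + \<alpha>)"
  then have h: "(\<alpha>^2::'a) - (1 + (\<alpha>^2 + \<alpha>)) = 0" by (rule iffD2[OF right_minus_eq])
  have "(1::'a) = 0" by (rule cert2[where hA="(\<alpha>*\<alpha> + \<alpha>)" and hB="(1)" and k="(\<alpha>*\<alpha>)", OF _ h root two]) (simp add: algebra_simps power2_eq_square power3_eq_cube)
  then show False by simp
qed

lemma dd_4_5: "(\<alpha>^2 + \<alpha>::'a) \<noteq> 1 + \<alpha>"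
proof
  assume h0: "(\<alpha>^2 + \<alpha>::'a) = 1 + \<alpha>"
  then have h: "(\<alpha>^2 + \<alpha>::'a) - (1 + \<alpha>) = 0" by (rule iffD2[OF right_minus_eq])
  have "(1::'a) = 0" by (rule cert2[where hA="(\<alpha>)" and hB="(1)" and k="(-\<alpha>*\<alpha>*\<alpha>)", OF _ h root two]) (simp add: algebra_simps power2_eq_square power3_eq_cube)
  then show False by simp
qed

lemma dd_4_6: "(\<alpha>^2 + \<alpha>::'a) \<noteq> 1 + \<alpha>^2"
proof
  assume h0: "(\<alpha>^2 + \<alpha>::'a) = 1 + \<alpha>^2"
  then have h: "(\<alpha>^2 + \<alpha>::'a) - (1 + \<alpha>^2) = 0" by (rule iffD2[OF right_minus_eq])
  have "(1::'a) = 0" by (rule cert2[where hA="(\<alpha>*\<alpha> + \<alpha>)" and hB="(1)" and k="(-\<alpha>*\<alpha>*\<alpha>)", OF _ h root two]) (simp add: algebra_simps power2_eq_square power3_eq_cube)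
  then show False by simp
qed

lemma dd_4_7: "(\<alpha>^2 + \<alpha>::'a) \<noteq> 1 + (\<alpha>^2 + \<alpha>)"
proof
  assume h0: "(\<alpha>^2 + \<alpha>::'a) = 1 + (\<alpha>^2 + \<alpha>)"
  then have h: "(\<alpha>^2 + \<alpha>::'a) - (1 + (\<alpha>^2 + \<alpha>)) = 0" by (rule iffD2[OF right_minus_eq])
  have "(1::'a) = 0" by (rule cert2[where hA="(1)" and hB="0" and k="(1)", OF _ h root two]) (simp add: algebra_simps power2_eq_square power3_eq_cube)
  then show False by simp
qed

lemma dd_5_6: "(1 + \<alpha>::'a) \<noteq> 1 + \<alpha>^2"
proof
  assume h0: "(1 + \<alpha>::'a) = 1 + \<alpha>^2"
  then have h: "(1 + \<alpha>::'a) - (1 + \<alpha>^2) = 0" by (rule iffD2[OF right_minus_eq])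
  have "(1::'a) = 0" by (rule cert2[where hA="(\<alpha> + 1)" and hB="(1)" and k="(-\<alpha>)", OF _ h root two]) (simp add: algebra_simps power2_eq_square power3_eq_cube)
  then show False by simp
qed

lemma dd_5_7: "(1 + \<alpha>::'a) \<noteq> 1 + (\<alpha>^2 + \<alpha>)"
proof
  assume h0: "(1 + \<alpha>::'a) = 1 + (\<alpha>^2 + \<alpha>)"
  then have h: "(1 + \<alpha>::'a) - (1 + (\<alpha>^2 + \<alpha>)) = 0" by (rule iffD2[OF right_minus_eq])
  have "(1::'a) = 0" by (rule cert2[where hA="(\<alpha>*\<alpha> + \<alpha> + 1)" and hB="(\<alpha> + 1)" and k="(-\<alpha>)", OF _ h root two]) (simp add: algebra_simps power2_eq_square power3_eq_cube)
  then show False by simp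
qed

lemma dd_6_7: "(1 + \<alpha>^2::'a) \<noteq> 1 + (\<alpha>^2 + \<alpha>)"
proof
  assume h0: "(1 + \<alpha>^2::'a) = 1 + (\<alpha>^2 + \<alpha>)"
  then have h: "(1 + \<alpha>^2::'a) - (1 + (\<alpha>^2 + \<alpha>)) = 0" by (rule iffD2[OF right_minus_eq])
  have "(1::'a) = 0" by (rule cert2[where hA="(\<alpha>*\<alpha> + 1)" and hB="(1)" and k="0", OF _ h root two]) (simp add: algebra_simps power2_eq_square power3_eq_cube)
  then show False by simp
qed

definition L27 where "L27 = L27gen (0) (1) (\<alpha>) (\<alpha>^2) (\<alpha>^2 + \<alpha>) (1 + \<alpha>) (1 + \<alpha>^2) (1 + (\<alpha>^2 + \<alpha>))"

lemma L27_distinct: "distinct L27"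
  unfolding L27_def by (rule L27gen_distinct[OF dd_0_1 dd_0_2 dd_0_3 dd_0_4 dd_0_5 dd_0_6 dd_0_7 dd_0_1[THEN not_sym] dd_1_2 dd_1_3 dd_1_4 dd_1_5 dd_1_6 dd_1_7 dd_0_2[THEN not_sym] dd_1_2[THEN not_sym] dd_2_3 dd_2_4 dd_2_5 dd_2_6 dd_2_7 dd_0_3[THEN not_sym] dd_1_3[THEN not_sym] dd_2_3[THEN not_sym] dd_3_4 dd_3_5 dd_3_6 dd_3_7 dd_0_4[THEN not_sym] dd_1_4[THEN not_sym] dd_2_4[THEN not_sym] dd_3_4[THEN not_sym] dd_4_5 dd_4_6 dd_4_7 dd_0_5[THEN not_sym] dd_1_5[THEN not_sym] dd_2_5[THEN not_sym] dd_3_5[THEN not_sym] dd_4_5[THEN not_sym] dd_5_6 dd_5_7 dd_0_6[THEN not_sym] dd_1_6[THEN not_sym] dd_2_6[THEN not_sym] dd_3_6[THEN not_sym] dd_4_6[THEN not_sym] dd_5_6[THEN not_sym] dd_6_7 dd_0_7[THEN not_sym] dd_1_7[THEN not_sym] dd_2_7[THEN not_sym] dd_3_7[THEN not_sym] dd_4_7[THEN not_sym] dd_5_7[THEN not_sym] dd_6_7[THEN not_sym]])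

lemma L27_len: "length L27 = 27"
  unfolding L27_def by (rule L27gen_len)

lemma coef: fixes p q :: "4 \<Rightarrow> 'a" assumes h: "\<forall>s t. P (\<lambda>k. s * p k + t * q k) = 0"
  shows "P p = 0" "P q = 0" "Bc p q = 0" "Bc q p = 0"
proof -
  have e: "\<And>s t. s^3 * P p + s^2 * t * Bc p q + s * t^2 * Bc q p + t^3 * P q = 0"
  proof -
    fix s t
    have "P (\<lambda>k. s * p k + t * q k) = 0" using h by blast
    then show "s^3 * P p + s^2 * t * Bc p q + s * t^2 * Bc q p + t^3 * P q = 0" by (simp only: expand)
  qed
  from e[of 1 0] show p1: "P p = 0" by simp
  from e[of 0 1] show p2: "P q = 0" by simp
  from e[of 1 1] p1 p2 have s1: "Bc p q + Bc q p = 0" by simp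
  from e[of 1 \<alpha>] p1 p2 have s2: "\<alpha> * Bc p q + \<alpha>^2 * Bc q p = 0" by simp
  have s3: "\<alpha> * (Bc p q + \<alpha> * Bc q p) = 0" using s2 by (simp add: algebra_simps power2_eq_square)
  then have s4: "Bc p q + \<alpha> * Bc q p = 0" using al_nz by simp
  have "(\<alpha> - 1) * Bc q p = (Bc p q + \<alpha> * Bc q p) - (Bc p q + Bc q p)" by (simp add: algebra_simps)
  then have "(\<alpha> - 1) * Bc q p = 0" using s1 s4 by simp
  moreover have "\<alpha> - 1 \<noteq> 0" using al_n1 by simp
  ultimately show c: "Bc q p = 0" by simp
  with s1 show "Bc p q = 0" by simp
qed

lemma famG0: fixes x :: 'a assumes r: "x^3 + x + 1 = 0" shows "\<forall>y\<in>G 0 (1 + x) x 0. P y = 0"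
  unfolding G_def
proof (rule onS)
  show "P (vec 1 0 0 (1 + x)) = 0" unfolding G_Pp by (rule cert1[where hA="0" and k="0", OF _ r two]) (simp add: algebra_simps power2_eq_square power3_eq_cube)
  show "P (vec 0 1 x 0) = 0" unfolding G_Pq by (rule cert1[where hA="0" and k="0", OF _ r two]) (simp add: algebra_simps power2_eq_square power3_eq_cube)
  show "Bc (vec 1 0 0 (1 + x)) (vec 0 1 x 0) = 0" unfolding G_Bpq by (rule cert1[where hA="(1)" and k="(x*x)", OF _ r two]) (simp add: algebra_simps power2_eq_square power3_eq_cube)
  show "Bc (vec 0 1 x 0) (vec 1 0 0 (1 + x)) = 0" unfolding G_Bqp by (rule cert1[where hA="(1)" and k="(x*x)", OF _ r two]) (simp add: algebra_simps power2_eq_square power3_eq_cube)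
qed

lemma famG1: fixes x :: 'a assumes r: "x^3 + x + 1 = 0" shows "\<forall>y\<in>G 0 (1 + x) x (1 + x). P y = 0"
  unfolding G_def
proof (rule onS)
  show "P (vec 1 0 0 (1 + x)) = 0" unfolding G_Pp by (rule cert1[where hA="0" and k="0", OF _ r two]) (simp add: algebra_simps power2_eq_square power3_eq_cube)
  show "P (vec 0 1 x (1 + x)) = 0" unfolding G_Pq by (rule cert1[where hA="0" and k="(x*x*x + 2*x*x + x)", OF _ r two]) (simp add: algebra_simps power2_eq_square power3_eq_cube)
  show "Bc (vec 1 0 0 (1 + x)) (vec 0 1 x (1 + x)) = 0" unfolding G_Bpq by (rule cert1[where hA="(1)" and k="(x*x)", OF _ r two]) (simp add: algebra_simps power2_eq_square power3_eq_cube)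
  show "Bc (vec 0 1 x (1 + x)) (vec 1 0 0 (1 + x)) = 0" unfolding G_Bqp by (rule cert1[where hA="(1)" and k="(x*x*x + 3*x*x + x)", OF _ r two]) (simp add: algebra_simps power2_eq_square power3_eq_cube)
qed

lemma famG2: fixes x :: 'a assumes r: "x^3 + x + 1 = 0" shows "\<forall>y\<in>G (1 + x) 0 0 x. P y = 0"
  unfolding G_def
proof (rule onS)
  show "P (vec 1 0 (1 + x) 0) = 0" unfolding G_Pp by (rule cert1[where hA="0" and k="0", OF _ r two]) (simp add: algebra_simps power2_eq_square power3_eq_cube)
  show "P (vec 0 1 0 x) = 0" unfolding G_Pq by (rule cert1[where hA="0" and k="0", OF _ r two]) (simp add: algebra_simps power2_eq_square power3_eq_cube)
  show "Bc (vec 1 0 (1 + x) 0) (vec 0 1 0 x) = 0" unfolding G_Bpq by (rule cert1[where hA="(1)" and k="(x*x)", OF _ r two]) (simp add: algebra_simps power2_eq_square power3_eq_cube)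
  show "Bc (vec 0 1 0 x) (vec 1 0 (1 + x) 0) = 0" unfolding G_Bqp by (rule cert1[where hA="(1)" and k="(x*x)", OF _ r two]) (simp add: algebra_simps power2_eq_square power3_eq_cube)
qed

lemma famG3: fixes x :: 'a assumes r: "x^3 + x + 1 = 0" shows "\<forall>y\<in>G (1 + x) 0 (1 + x) x. P y = 0"
  unfolding G_def
proof (rule onS)
  show "P (vec 1 0 (1 + x) 0) = 0" unfolding G_Pp by (rule cert1[where hA="0" and k="0", OF _ r two]) (simp add: algebra_simps power2_eq_square power3_eq_cube)
  show "P (vec 0 1 (1 + x) x) = 0" unfolding G_Pq by (rule cert1[where hA="0" and k="(x*x*x + 2*x*x + x)", OF _ r two]) (simp add: algebra_simps power2_eq_square power3_eq_cube)
  show "Bc (vec 1 0 (1 + x) 0) (vec 0 1 (1 + x) x) = 0" unfolding G_Bpq by (rule cert1[where hA="(1)" and k="(x*x)", OF _ r two]) (simp add: algebra_simps power2_eq_square power3_eq_cube)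
  show "Bc (vec 0 1 (1 + x) x) (vec 1 0 (1 + x) 0) = 0" unfolding G_Bqp by (rule cert1[where hA="(1)" and k="(x*x*x + 3*x*x + x)", OF _ r two]) (simp add: algebra_simps power2_eq_square power3_eq_cube)
qed

lemma famG4: fixes x :: 'a assumes r: "x^3 + x + 1 = 0" shows "\<forall>y\<in>G (1 + x) (1 + x) 0 (1 + x). P y = 0"
  unfolding G_def
proof (rule onS)
  show "P (vec 1 0 (1 + x) (1 + x)) = 0" unfolding G_Pp by (rule cert1[where hA="0" and k="(x*x*x + 3*x*x + 3*x + 1)", OF _ r two]) (simp add: algebra_simps power2_eq_square power3_eq_cube)
  show "P (vec 0 1 0 (1 + x)) = 0" unfolding G_Pq by (rule cert1[where hA="0" and k="0", OF _ r two]) (simp add: algebra_simps power2_eq_square power3_eq_cube)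
  show "Bc (vec 1 0 (1 + x) (1 + x)) (vec 0 1 0 (1 + x)) = 0" unfolding G_Bpq by (rule cert1[where hA="(1)" and k="(x*x*x + 5*x*x + 5*x + 2)", OF _ r two]) (simp add: algebra_simps power2_eq_square power3_eq_cube)
  show "Bc (vec 0 1 0 (1 + x)) (vec 1 0 (1 + x) (1 + x)) = 0" unfolding G_Bqp by (rule cert1[where hA="(1)" and k="(2*x*x + 2*x + 1)", OF _ r two]) (simp add: algebra_simps power2_eq_square power3_eq_cube)
qed

lemma famG5: fixes x :: 'a assumes r: "x^3 + x + 1 = 0" shows "\<forall>y\<in>G (1 + x) (1 + x) (1 + x) 0. P y = 0"
  unfolding G_def
proof (rule onS)
  show "P (vec 1 0 (1 + x) (1 + x)) = 0" unfolding G_Pp by (rule cert1[where hA="0" and k="(x*x*x + 3*x*x + 3*x + 1)", OF _ r two]) (simp add: algebra_simps power2_eq_square power3_eq_cube)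
  show "P (vec 0 1 (1 + x) 0) = 0" unfolding G_Pq by (rule cert1[where hA="0" and k="0", OF _ r two]) (simp add: algebra_simps power2_eq_square power3_eq_cube)
  show "Bc (vec 1 0 (1 + x) (1 + x)) (vec 0 1 (1 + x) 0) = 0" unfolding G_Bpq by (rule cert1[where hA="(1)" and k="(x*x*x + 5*x*x + 5*x + 2)", OF _ r two]) (simp add: algebra_simps power2_eq_square power3_eq_cube)
  show "Bc (vec 0 1 (1 + x) 0) (vec 1 0 (1 + x) (1 + x)) = 0" unfolding G_Bqp by (rule cert1[where hA="(1)" and k="(2*x*x + 2*x + 1)", OF _ r two]) (simp add: algebra_simps power2_eq_square power3_eq_cube)
qed

lemma onH0: "\<forall>y\<in>((H02 0 0 0) :: (4 \<Rightarrow> 'a) set). P y = 0"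
  unfolding H02_def
proof (rule onS)
  show "P (vec 1 0 0 0 :: 4 \<Rightarrow> 'a) = 0" unfolding H02_Pp by (rule cert0[where k="0", OF _  two]) (simp add: algebra_simps power2_eq_square power3_eq_cube)
  show "P (vec 0 0 1 0 :: 4 \<Rightarrow> 'a) = 0" unfolding H02_Pq by (rule cert0[where k="0", OF _  two]) (simp add: algebra_simps power2_eq_square power3_eq_cube)
  show "Bc (vec 1 0 0 0 :: 4 \<Rightarrow> 'a) (vec 0 0 1 0) = 0" unfolding H02_Bpq by (rule cert0[where k="0", OF _  two]) (simp add: algebra_simps power2_eq_square power3_eq_cube)
  show "Bc (vec 0 0 1 0 :: 4 \<Rightarrow> 'a) (vec 1 0 0 0) = 0" unfolding H02_Bqp by (rule cert0[where k="0", OF _  two]) (simp add: algebra_simps power2_eq_square power3_eq_cube)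
qed

lemma onH1: "\<forall>y\<in>((H02 0 0 1) :: (4 \<Rightarrow> 'a) set). P y = 0"
  unfolding H02_def
proof (rule onS)
  show "P (vec 1 0 0 0 :: 4 \<Rightarrow> 'a) = 0" unfolding H02_Pp by (rule cert0[where k="0", OF _  two]) (simp add: algebra_simps power2_eq_square power3_eq_cube)
  show "P (vec 0 0 1 1 :: 4 \<Rightarrow> 'a) = 0" unfolding H02_Pq by (rule cert0[where k="(1)", OF _  two]) (simp add: algebra_simps power2_eq_square power3_eq_cube)
  show "Bc (vec 1 0 0 0 :: 4 \<Rightarrow> 'a) (vec 0 0 1 1) = 0" unfolding H02_Bpq by (rule cert0[where k="0", OF _  two]) (simp add: algebra_simps power2_eq_square power3_eq_cube)
  show "Bc (vec 0 0 1 1 :: 4 \<Rightarrow> 'a) (vec 1 0 0 0) = 0" unfolding H02_Bqp by (rule cert0[where k="0", OF _  two]) (simp add: algebra_simps power2_eq_square power3_eq_cube)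
qed

lemma onH2: "\<forall>y\<in>((H02 1 0 0) :: (4 \<Rightarrow> 'a) set). P y = 0"
  unfolding H02_def
proof (rule onS)
  show "P (vec 1 1 0 0 :: 4 \<Rightarrow> 'a) = 0" unfolding H02_Pp by (rule cert0[where k="(1)", OF _  two]) (simp add: algebra_simps power2_eq_square power3_eq_cube)
  show "P (vec 0 0 1 0 :: 4 \<Rightarrow> 'a) = 0" unfolding H02_Pq by (rule cert0[where k="0", OF _  two]) (simp add: algebra_simps power2_eq_square power3_eq_cube)
  show "Bc (vec 1 1 0 0 :: 4 \<Rightarrow> 'a) (vec 0 0 1 0) = 0" unfolding H02_Bpq by (rule cert0[where k="0", OF _  two]) (simp add: algebra_simps power2_eq_square power3_eq_cube)
  show "Bc (vec 0 0 1 0 :: 4 \<Rightarrow> 'a) (vec 1 1 0 0) = 0" unfolding H02_Bqp by (rule cert0[where k="0", OF _  two]) (simp add: algebra_simps power2_eq_square power3_eq_cube)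
qed

lemma onH3: "\<forall>y\<in>((H02 1 1 1) :: (4 \<Rightarrow> 'a) set). P y = 0"
  unfolding H02_def
proof (rule onS)
  show "P (vec 1 1 0 1 :: 4 \<Rightarrow> 'a) = 0" unfolding H02_Pp by (rule cert0[where k="(1)", OF _  two]) (simp add: algebra_simps power2_eq_square power3_eq_cube)
  show "P (vec 0 0 1 1 :: 4 \<Rightarrow> 'a) = 0" unfolding H02_Pq by (rule cert0[where k="(1)", OF _  two]) (simp add: algebra_simps power2_eq_square power3_eq_cube)
  show "Bc (vec 1 1 0 1 :: 4 \<Rightarrow> 'a) (vec 0 0 1 1) = 0" unfolding H02_Bpq by (rule cert0[where k="(1)", OF _  two]) (simp add: algebra_simps power2_eq_square power3_eq_cube)
  show "Bc (vec 0 0 1 1 :: 4 \<Rightarrow> 'a) (vec 1 1 0 1) = 0" unfolding H02_Bqp by (rule cert0[where k="(2)", OF _  two]) (simp add: algebra_simps power2_eq_square power3_eq_cube)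
qed

lemma onH4: "\<forall>y\<in>((H03 0 0) :: (4 \<Rightarrow> 'a) set). P y = 0"
  unfolding H03_def
proof (rule onS)
  show "P (vec 1 0 0 0 :: 4 \<Rightarrow> 'a) = 0" unfolding H03_Pp by (rule cert0[where k="0", OF _  two]) (simp add: algebra_simps power2_eq_square power3_eq_cube)
  show "P (vec 0 0 0 1 :: 4 \<Rightarrow> 'a) = 0" unfolding H03_Pq by (rule cert0[where k="0", OF _  two]) (simp add: algebra_simps power2_eq_square power3_eq_cube)
  show "Bc (vec 1 0 0 0 :: 4 \<Rightarrow> 'a) (vec 0 0 0 1) = 0" unfolding H03_Bpq by (rule cert0[where k="0", OF _  two]) (simp add: algebra_simps power2_eq_square power3_eq_cube)
  show "Bc (vec 0 0 0 1 :: 4 \<Rightarrow> 'a) (vec 1 0 0 0) = 0" unfolding H03_Bqp by (rule cert0[where k="0", OF _  two]) (simp add: algebra_simps power2_eq_square power3_eq_cube)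
qed

lemma onH5: "\<forall>y\<in>((H03 1 0) :: (4 \<Rightarrow> 'a) set). P y = 0"
  unfolding H03_def
proof (rule onS)
  show "P (vec 1 1 0 0 :: 4 \<Rightarrow> 'a) = 0" unfolding H03_Pp by (rule cert0[where k="(1)", OF _  two]) (simp add: algebra_simps power2_eq_square power3_eq_cube)
  show "P (vec 0 0 0 1 :: 4 \<Rightarrow> 'a) = 0" unfolding H03_Pq by (rule cert0[where k="0", OF _  two]) (simp add: algebra_simps power2_eq_square power3_eq_cube)
  show "Bc (vec 1 1 0 0 :: 4 \<Rightarrow> 'a) (vec 0 0 0 1) = 0" unfolding H03_Bpq by (rule cert0[where k="0", OF _  two]) (simp add: algebra_simps power2_eq_square power3_eq_cube)
  show "Bc (vec 0 0 0 1 :: 4 \<Rightarrow> 'a) (vec 1 1 0 0) = 0" unfolding H03_Bqp by (rule cert0[where k="0", OF _  two]) (simp add: algebra_simps power2_eq_square power3_eq_cube)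
qed

lemma onH6: "\<forall>y\<in>((H12 0 0) :: (4 \<Rightarrow> 'a) set). P y = 0"
  unfolding H12_def
proof (rule onS)
  show "P (vec 0 1 0 0 :: 4 \<Rightarrow> 'a) = 0" unfolding H12_Pp by (rule cert0[where k="0", OF _  two]) (simp add: algebra_simps power2_eq_square power3_eq_cube)
  show "P (vec 0 0 1 0 :: 4 \<Rightarrow> 'a) = 0" unfolding H12_Pq by (rule cert0[where k="0", OF _  two]) (simp add: algebra_simps power2_eq_square power3_eq_cube)
  show "Bc (vec 0 1 0 0 :: 4 \<Rightarrow> 'a) (vec 0 0 1 0) = 0" unfolding H12_Bpq by (rule cert0[where k="0", OF _  two]) (simp add: algebra_simps power2_eq_square power3_eq_cube)
  show "Bc (vec 0 0 1 0 :: 4 \<Rightarrow> 'a) (vec 0 1 0 0) = 0" unfolding H12_Bqp by (rule cert0[where k="0", OF _  two]) (simp add: algebra_simps power2_eq_square power3_eq_cube)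
qed

lemma onH7: "\<forall>y\<in>((H12 1 1) :: (4 \<Rightarrow> 'a) set). P y = 0"
  unfolding H12_def
proof (rule onS)
  show "P (vec 0 1 0 1 :: 4 \<Rightarrow> 'a) = 0" unfolding H12_Pp by (rule cert0[where k="0", OF _  two]) (simp add: algebra_simps power2_eq_square power3_eq_cube)
  show "P (vec 0 0 1 1 :: 4 \<Rightarrow> 'a) = 0" unfolding H12_Pq by (rule cert0[where k="(1)", OF _  two]) (simp add: algebra_simps power2_eq_square power3_eq_cube)
  show "Bc (vec 0 1 0 1 :: 4 \<Rightarrow> 'a) (vec 0 0 1 1) = 0" unfolding H12_Bpq by (rule cert0[where k="(1)", OF _  two]) (simp add: algebra_simps power2_eq_square power3_eq_cube)
  show "Bc (vec 0 0 1 1 :: 4 \<Rightarrow> 'a) (vec 0 1 0 1) = 0" unfolding H12_Bqp by (rule cert0[where k="(2)", OF _  two]) (simp add: algebra_simps power2_eq_square power3_eq_cube)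
qed

lemma onH8: "\<forall>y\<in>((H13 0) :: (4 \<Rightarrow> 'a) set). P y = 0"
  unfolding H13_def
proof (rule onS)
  show "P (vec 0 1 0 0 :: 4 \<Rightarrow> 'a) = 0" unfolding H13_Pp by (rule cert0[where k="0", OF _  two]) (simp add: algebra_simps power2_eq_square power3_eq_cube)
  show "P (vec 0 0 0 1 :: 4 \<Rightarrow> 'a) = 0" unfolding H13_Pq by (rule cert0[where k="0", OF _  two]) (simp add: algebra_simps power2_eq_square power3_eq_cube)
  show "Bc (vec 0 1 0 0 :: 4 \<Rightarrow> 'a) (vec 0 0 0 1) = 0" unfolding H13_Bpq by (rule cert0[where k="0", OF _  two]) (simp add: algebra_simps power2_eq_square power3_eq_cube)
  show "Bc (vec 0 0 0 1 :: 4 \<Rightarrow> 'a) (vec 0 1 0 0) = 0" unfolding H13_Bqp by (rule cert0[where k="0", OF _  two]) (simp add: algebra_simps power2_eq_square power3_eq_cube)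
qed

lemma L27_on: "\<forall>L\<in>set L27. is_line L \<and> (\<forall>x\<in>L. P x = 0)"
  unfolding L27_def L27gen_def
  by (simp add: isl_G isl_H02 isl_H03 isl_H12 isl_H13 famG0[OF root] famG1[OF root] famG2[OF root] famG3[OF root] famG4[OF root] famG5[OF root] famG0[OF rB] famG1[OF rB] famG2[OF rB] famG3[OF rB] famG4[OF rB] famG5[OF rB] famG0[OF rC] famG1[OF rC] famG2[OF rC] famG3[OF rC] famG4[OF rC] famG5[OF rC] onH0 onH1 onH2 onH3 onH4 onH5 onH6 onH7 onH8)
lemma solveG:
  assumes E1: "((a*a*b + a*b*b)::'a) = 0" and E4: "((c*c*d + c*d*d + c*d)::'a) = 0" and E2: "((a*a*d + 2*a*b*c + 2*a*b*d + a*b + b*b*c + 1)::'a) = 0" and E3: "((2*a*c*d + a*d*d + a*d + b*c*c + 2*b*c*d + b*c + 1)::'a) = 0"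
  shows "G a b c d \<in> set L27"
proof -
  have f1: "a*b*(a+b) = 0"
    by (rule cert1[where hA="(1)" and k="0", OF _ E1 two]) (simp add: algebra_simps power2_eq_square power3_eq_cube)
  then consider (A) "a = 0" | (B) "b = 0" | (S) "a + b = 0" by (metis mult_eq_0_iff)
  then show ?thesis
  proof cases
    case A
    have F2: "1 + b*b*c = 0"
      by (rule cert1[where hA="(1)" and k="0", OF _ E2[unfolded A] two]) (simp add: algebra_simps power2_eq_square power3_eq_cube)
    have F3: "1 + b*c + b*c*c = 0"
      by (rule cert1[where hA="(1)" and k="(-b*c*d)", OF _ E3[unfolded A] two]) (simp add: algebra_simps power2_eq_square power3_eq_cube)
    have F4: "b*c*(b + 1 + c) = 0"
      by (rule cert2[where hA="(1)" and hB="(1)" and k="(-1)", OF _ F2 F3 two]) (simp add: algebra_simps power2_eq_square power3_eq_cube)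
    have bnz: "b \<noteq> 0" using F2 by auto
    have cnz: "c \<noteq> 0" using F2 by auto
    have F5: "b + 1 + c = 0" using F4 bnz cnz by (metis mult_eq_0_iff)
    have bs: "b = 1 + c"
    proof (rule d0)
      show "b - (1 + c) = 0"
        by (rule cert1[where hA="(1)" and k="(-c - 1)", OF _ F5 two]) (simp add: algebra_simps power2_eq_square power3_eq_cube)
    qed
    have F6: "c^3 + c + 1 = 0"
      by (rule cert1[where hA="(1)" and k="(-c*c)", OF _ F2[unfolded bs] two]) (simp add: algebra_simps power2_eq_square power3_eq_cube)
    have F7: "c*d*(1 + c + d) = 0"
      by (rule cert1[where hA="(1)" and k="0", OF _ E4 two]) (simp add: algebra_simps power2_eq_square power3_eq_cube)
    have dd: "d = 0 \<or> 1 + c + d = 0" using F7 cnz by (metis mult_eq_0_iff)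
    have dd': "d = 0 \<or> d = 1 + c"
    proof (rule disjE[OF dd])
      assume "d = 0" then show ?thesis by simp
    next
      assume h: "1 + c + d = 0"
      have "d = 1 + c"
      proof (rule d0)
        show "d - (1 + c) = 0"
          by (rule cert1[where hA="(1)" and k="(-c - 1)", OF _ h two]) (simp add: algebra_simps power2_eq_square power3_eq_cube)
      qed
      then show ?thesis by simp
    qed
    show ?thesis by (insert rt[OF F6] dd' A bs, elim disjE, simp_all add: L27_def L27gen_def)
  next
    case B
    have F2: "1 + a*a*d = 0"
      by (rule cert1[where hA="(1)" and k="0", OF _ E2[unfolded B] two]) (simp add: algebra_simps power2_eq_square power3_eq_cube)
    have F3: "1 + a*d + a*d*d = 0"
      by (rule cert1[where hA="(1)" and k="(-a*c*d)", OF _ E3[unfolded B] two]) (simp add: algebra_simps power2_eq_square power3_eq_cube)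
    have F4: "a*d*(a + 1 + d) = 0"
      by (rule cert2[where hA="(1)" and hB="(1)" and k="(-1)", OF _ F2 F3 two]) (simp add: algebra_simps power2_eq_square power3_eq_cube)
    have anz: "a \<noteq> 0" using F2 by auto
    have dnz: "d \<noteq> 0" using F2 by auto
    have F5: "a + 1 + d = 0" using F4 anz dnz by (metis mult_eq_0_iff)
    have as: "a = 1 + d"
    proof (rule d0)
      show "a - (1 + d) = 0"
        by (rule cert1[where hA="(1)" and k="(-d - 1)", OF _ F5 two]) (simp add: algebra_simps power2_eq_square power3_eq_cube)
    qed
    have F6: "d^3 + d + 1 = 0"
      by (rule cert1[where hA="(1)" and k="(-d*d)", OF _ F2[unfolded as] two]) (simp add: algebra_simps power2_eq_square power3_eq_cube)
    have F7: "c*d*(1 + c + d) = 0"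
      by (rule cert1[where hA="(1)" and k="0", OF _ E4 two]) (simp add: algebra_simps power2_eq_square power3_eq_cube)
    have cc: "c = 0 \<or> 1 + c + d = 0" using F7 dnz by (metis mult_eq_0_iff)
    have cc': "c = 0 \<or> c = 1 + d"
    proof (rule disjE[OF cc])
      assume "c = 0" then show ?thesis by simp
    next
      assume h: "1 + c + d = 0"
      have "c = 1 + d"
      proof (rule d0)
        show "c - (1 + d) = 0"
          by (rule cert1[where hA="(1)" and k="(-d - 1)", OF _ h two]) (simp add: algebra_simps power2_eq_square power3_eq_cube)
      qed
      then show ?thesis by simp
    qed
    show ?thesis by (insert rt[OF F6] cc' B as, elim disjE, simp_all add: L27_def L27gen_def)
  next
    case S
    have bs: "b = a"
    proof (rule d0)
      show "b - (a) = 0"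
        by (rule cert1[where hA="(1)" and k="(-a)", OF _ S two]) (simp add: algebra_simps power2_eq_square power3_eq_cube)
    qed
    have F7: "c*d*(1 + c + d) = 0"
      by (rule cert1[where hA="(1)" and k="0", OF _ E4 two]) (simp add: algebra_simps power2_eq_square power3_eq_cube)
    consider (C0) "c = 0" | (D0) "d = 0" | (T) "1 + c + d = 0" using F7 by (metis mult_eq_0_iff)
    then show ?thesis
    proof cases
      case T
      have ds: "d = 1 + c"
      proof (rule d0)
        show "d - (1 + c) = 0"
          by (rule cert1[where hA="(1)" and k="(-c - 1)", OF _ T two]) (simp add: algebra_simps power2_eq_square power3_eq_cube)
      qed
      have "(1::'a) = 0"
        by (rule cert1[where hA="(1)" and k="(-3*a*a*c - 2*a*a)", OF _ E2[unfolded bs ds] two]) (simp add: algebra_simps power2_eq_square power3_eq_cube)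
      then show ?thesis by simp
    next
      case C0
      have F2: "1 + a*a + a*a*d = 0"
        by (rule cert1[where hA="(1)" and k="(-a*a*d)", OF _ E2[unfolded bs C0] two]) (simp add: algebra_simps power2_eq_square power3_eq_cube)
      have F3: "1 + a*d + a*d*d = 0"
        by (rule cert1[where hA="(1)" and k="0", OF _ E3[unfolded bs C0] two]) (simp add: algebra_simps power2_eq_square power3_eq_cube)
      have F4: "a*(1 + d)*(a + d) = 0"
        by (rule cert2[where hA="(1)" and hB="(1)" and k="(-1)", OF _ F2 F3 two]) (simp add: algebra_simps power2_eq_square power3_eq_cube)
      have anz: "a \<noteq> 0" using F2 by auto
      have d1: "1 + d \<noteq> 0"
      proof
        assume h: "1 + d = 0"
        have ds: "d = 1"
        proof (rule d0)
          show "d - (1) = 0"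
            by (rule cert1[where hA="(1)" and k="(-1)", OF _ h two]) (simp add: algebra_simps power2_eq_square power3_eq_cube)
        qed
        have "(1::'a) = 0"
          by (rule cert1[where hA="(1)" and k="(-a*a)", OF _ F2[unfolded ds] two]) (simp add: algebra_simps power2_eq_square power3_eq_cube)
        then show False by simp
      qed
      have F5: "a + d = 0" using F4 anz d1 by (metis mult_eq_0_iff)
      have as: "a = d"
      proof (rule d0)
        show "a - (d) = 0"
          by (rule cert1[where hA="(1)" and k="(-d)", OF _ F5 two]) (simp add: algebra_simps power2_eq_square power3_eq_cube)
      qed
      have F6: "(1 + d)^3 + (1 + d) + 1 = 0"
        by (rule cert1[where hA="(1)" and k="(d*d + 2*d + 1)", OF _ F2[unfolded as] two]) (simp add: algebra_simps power2_eq_square power3_eq_cube)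
      have dr: "d = 1 + \<alpha> \<or> d = 1 + \<alpha>^2 \<or> d = 1 + (\<alpha>^2 + \<alpha>)"
        using rt[OF F6] flip1[OF two, of d] by blast
      show ?thesis by (insert dr C0 as bs, elim disjE, simp_all add: L27_def L27gen_def)
    next
      case D0
      have F2: "1 + a*a + a*a*c = 0"
        by (rule cert1[where hA="(1)" and k="(-a*a*c)", OF _ E2[unfolded bs D0] two]) (simp add: algebra_simps power2_eq_square power3_eq_cube)
      have F3: "1 + a*c + a*c*c = 0"
        by (rule cert1[where hA="(1)" and k="0", OF _ E3[unfolded bs D0] two]) (simp add: algebra_simps power2_eq_square power3_eq_cube)
      have F4: "a*(1 + c)*(a + c) = 0"
        by (rule cert2[where hA="(1)" and hB="(1)" and k="(-1)", OF _ F2 F3 two]) (simp add: algebra_simps power2_eq_square power3_eq_cube)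
      have anz: "a \<noteq> 0" using F2 by auto
      have c1: "1 + c \<noteq> 0"
      proof
        assume h: "1 + c = 0"
        have cs: "c = 1"
        proof (rule d0)
          show "c - (1) = 0"
            by (rule cert1[where hA="(1)" and k="(-1)", OF _ h two]) (simp add: algebra_simps power2_eq_square power3_eq_cube)
        qed
        have "(1::'a) = 0"
          by (rule cert1[where hA="(1)" and k="(-a*a)", OF _ F2[unfolded cs] two]) (simp add: algebra_simps power2_eq_square power3_eq_cube)
        then show False by simp
      qed
      have F5: "a + c = 0" using F4 anz c1 by (metis mult_eq_0_iff)
      have as: "a = c"
      proof (rule d0)
        show "a - (c) = 0"
          by (rule cert1[where hA="(1)" and k="(-c)", OF _ F5 two]) (simp add: algebra_simps power2_eq_square power3_eq_cube)
      qed
      have F6: "(1 + c)^3 + (1 + c) + 1 = 0"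
        by (rule cert1[where hA="(1)" and k="(c*c + 2*c + 1)", OF _ F2[unfolded as] two]) (simp add: algebra_simps power2_eq_square power3_eq_cube)
      have cr: "c = 1 + \<alpha> \<or> c = 1 + \<alpha>^2 \<or> c = 1 + (\<alpha>^2 + \<alpha>)"
        using rt[OF F6] flip1[OF two, of c] by blast
      show ?thesis by (insert cr D0 as bs, elim disjE, simp_all add: L27_def L27gen_def)
    qed
  qed
qed

lemma solveH02:
  assumes E1: "((a*a + a)::'a) = 0" and E4: "((c*c + c)::'a) = 0" and E3: "((a*c + 2*b*c + b)::'a) = 0"
  shows "H02 a b c \<in> set L27"
proof -
  have za: "a*(1 + a) = 0"
    by (rule cert1[where hA="(1)" and k="0", OF _ E1 two]) (simp add: algebra_simps power2_eq_square power3_eq_cube)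
  have zc: "c*(1 + c) = 0"
    by (rule cert1[where hA="(1)" and k="0", OF _ E4 two]) (simp add: algebra_simps power2_eq_square power3_eq_cube)
  from zo[OF two za] zo[OF two zc] show ?thesis
  proof (elim disjE)
    assume HA: "a = 0" and HC: "c = 0"
    have HB: "b = 0"
    proof (rule d0)
      show "b - (0) = 0"
        by (rule cert1[where hA="(1)" and k="0", OF _ E3[unfolded HA HC] two]) (simp add: algebra_simps power2_eq_square power3_eq_cube)
    qed
    show ?thesis using HA HB HC by (simp add: L27_def L27gen_def)
  next
    assume HA: "a = 0" and HC: "c = 1"
    have HB: "b = 0"
    proof (rule d0)
      show "b - (0) = 0"
        by (rule cert1[where hA="(1)" and k="(-b)", OF _ E3[unfolded HA HC] two]) (simp add: algebra_simps power2_eq_square power3_eq_cube)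
    qed
    show ?thesis using HA HB HC by (simp add: L27_def L27gen_def)
  next
    assume HA: "a = 1" and HC: "c = 0"
    have HB: "b = 0"
    proof (rule d0)
      show "b - (0) = 0"
        by (rule cert1[where hA="(1)" and k="0", OF _ E3[unfolded HA HC] two]) (simp add: algebra_simps power2_eq_square power3_eq_cube)
    qed
    show ?thesis using HA HB HC by (simp add: L27_def L27gen_def)
  next
    assume HA: "a = 1" and HC: "c = 1"
    have HB: "b = 1"
    proof (rule d0)
      show "b - (1) = 0"
        by (rule cert1[where hA="(1)" and k="(-b - 1)", OF _ E3[unfolded HA HC] two]) (simp add: algebra_simps power2_eq_square power3_eq_cube)
    qed
    show ?thesis using HA HB HC by (simp add: L27_def L27gen_def)
  qed
qed

lemma solveH03:
  assumes E1: "((a*a + a)::'a) = 0" and E3: "((b)::'a) = 0"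
  shows "H03 a b \<in> set L27"
proof -
  have za: "a*(1 + a) = 0"
    by (rule cert1[where hA="(1)" and k="0", OF _ E1 two]) (simp add: algebra_simps power2_eq_square power3_eq_cube)
  have HB: "b = 0"
  proof (rule d0)
    show "b - (0) = 0"
      by (rule cert1[where hA="(1)" and k="0", OF _ E3 two]) (simp add: algebra_simps power2_eq_square power3_eq_cube)
  qed
  show ?thesis by (insert zo[OF two za] HB, elim disjE, simp_all add: L27_def L27gen_def)
qed

lemma solveH12:
  assumes E2: "((a*a + a)::'a) = 0" and E4: "((b*b + b)::'a) = 0" and E3: "((2*a*b + a + b)::'a) = 0"
  shows "H12 a b \<in> set L27"
proof -
  have za: "a*(1 + a) = 0"
    by (rule cert1[where hA="(1)" and k="0", OF _ E2 two]) (simp add: algebra_simps power2_eq_square power3_eq_cube)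
  have zb: "b*(1 + b) = 0"
    by (rule cert1[where hA="(1)" and k="0", OF _ E4 two]) (simp add: algebra_simps power2_eq_square power3_eq_cube)
  from zo[OF two za] zo[OF two zb] show ?thesis
  proof (elim disjE)
    assume HA: "a = 0" and HB: "b = 0"
    show ?thesis using HA HB by (simp add: L27_def L27gen_def)
  next
    assume HA: "a = 0" and HB: "b = 1"
    have "(1::'a) = 0"
      by (rule cert1[where hA="(1)" and k="0", OF _ E3[unfolded HA HB] two]) (simp add: algebra_simps power2_eq_square power3_eq_cube)
    then show ?thesis by simp
  next
    assume HA: "a = 1" and HB: "b = 0"
    have "(1::'a) = 0"
      by (rule cert1[where hA="(1)" and k="0", OF _ E3[unfolded HA HB] two]) (simp add: algebra_simps power2_eq_square power3_eq_cube)
    then show ?thesis by simp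
  next
    assume HA: "a = 1" and HB: "b = 1"
    show ?thesis using HA HB by (simp add: L27_def L27gen_def)
  qed
qed

lemma solveH13:
  assumes E3: "((a)::'a) = 0"
  shows "H13 a \<in> set L27"
proof -
  have HA: "a = 0"
  proof (rule d0)
    show "a - (0) = 0"
      by (rule cert1[where hA="(1)" and k="0", OF _ E3 two]) (simp add: algebra_simps power2_eq_square power3_eq_cube)
  qed
  then show ?thesis by (simp add: L27_def L27gen_def)
qed

lemma solveH23:
  assumes E2: "((1)::'a) = 0"
  shows "H23 \<in> set L27"
proof -
  have "(1::'a) = 0"
    by (rule cert1[where hA="(1)" and k="0", OF _ E2 two]) (simp add: algebra_simps power2_eq_square power3_eq_cube)
  then show ?thesis by simp
qed

lemma chart_G: assumes h: "\<forall>s t. P (\<lambda>k. s * ((vec 1 0 a b) :: 4 \<Rightarrow> 'a) k + t * (vec 0 1 c d) k) = 0"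
  shows "(G a b c d) \<in> set L27"
proof -
  note cf = coef[OF h]
  have E1: "((a*a*b + a*b*b)::'a) = 0" using cf(1) unfolding G_Pp .
  have E4: "((c*c*d + c*d*d + c*d)::'a) = 0" using cf(2) unfolding G_Pq .
  have E2: "((a*a*d + 2*a*b*c + 2*a*b*d + a*b + b*b*c + 1)::'a) = 0" using cf(3) unfolding G_Bpq .
  have E3: "((2*a*c*d + a*d*d + a*d + b*c*c + 2*b*c*d + b*c + 1)::'a) = 0" using cf(4) unfolding G_Bqp .
  show ?thesis by (rule solveG[OF E1 E4 E2 E3])
qed

lemma chart_H02: assumes h: "\<forall>s t. P (\<lambda>k. s * ((vec 1 a 0 b) :: 4 \<Rightarrow> 'a) k + t * (vec 0 0 1 c) k) = 0"
  shows "(H02 a b c) \<in> set L27"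
proof -
  note cf = coef[OF h]
  have E1: "((a*a + a)::'a) = 0" using cf(1) unfolding H02_Pp .
  have E4: "((c*c + c)::'a) = 0" using cf(2) unfolding H02_Pq .
  have E2: "((a*b + b*b)::'a) = 0" using cf(3) unfolding H02_Bpq .
  have E3: "((a*c + 2*b*c + b)::'a) = 0" using cf(4) unfolding H02_Bqp .
  show ?thesis by (rule solveH02[OF E1 E4 E3])
qed

lemma chart_H03: assumes h: "\<forall>s t. P (\<lambda>k. s * ((vec 1 a b 0) :: 4 \<Rightarrow> 'a) k + t * (vec 0 0 0 1) k) = 0"
  shows "(H03 a b) \<in> set L27"
proof -
  note cf = coef[OF h]
  have E1: "((a*a + a)::'a) = 0" using cf(1) unfolding H03_Pp .
  have E4: "(0::'a) = 0" using cf(2) unfolding H03_Pq .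
  have E2: "((a*b + b*b)::'a) = 0" using cf(3) unfolding H03_Bpq .
  have E3: "((b)::'a) = 0" using cf(4) unfolding H03_Bqp .
  show ?thesis by (rule solveH03[OF E1 E3])
qed

lemma chart_H12: assumes h: "\<forall>s t. P (\<lambda>k. s * ((vec 0 1 0 a) :: 4 \<Rightarrow> 'a) k + t * (vec 0 0 1 b) k) = 0"
  shows "(H12 a b) \<in> set L27"
proof -
  note cf = coef[OF h]
  have E1: "(0::'a) = 0" using cf(1) unfolding H12_Pp .
  have E4: "((b*b + b)::'a) = 0" using cf(2) unfolding H12_Pq .
  have E2: "((a*a + a)::'a) = 0" using cf(3) unfolding H12_Bpq .
  have E3: "((2*a*b + a + b)::'a) = 0" using cf(4) unfolding H12_Bqp .
  show ?thesis by (rule solveH12[OF E2 E4 E3])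
qed

lemma chart_H13: assumes h: "\<forall>s t. P (\<lambda>k. s * ((vec 0 1 a 0) :: 4 \<Rightarrow> 'a) k + t * (vec 0 0 0 1) k) = 0"
  shows "(H13 a) \<in> set L27"
proof -
  note cf = coef[OF h]
  have E1: "(0::'a) = 0" using cf(1) unfolding H13_Pp .
  have E4: "(0::'a) = 0" using cf(2) unfolding H13_Pq .
  have E2: "((a*a + a)::'a) = 0" using cf(3) unfolding H13_Bpq .
  have E3: "((a)::'a) = 0" using cf(4) unfolding H13_Bqp .
  show ?thesis by (rule solveH13[OF E3])
qed

lemma chart_H23: assumes h: "\<forall>s t. P (\<lambda>k. s * ((vec 0 0 1 0) :: 4 \<Rightarrow> 'a) k + t * (vec 0 0 0 1) k) = 0"
  shows "H23 \<in> set L27"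
proof -
  note cf = coef[OF h]
  have E1: "(0::'a) = 0" using cf(1) unfolding H23_Pp .
  have E4: "(0::'a) = 0" using cf(2) unfolding H23_Pq .
  have E2: "((1)::'a) = 0" using cf(3) unfolding H23_Bpq .
  have E3: "((1)::'a) = 0" using cf(4) unfolding H23_Bqp .
  show ?thesis by (rule solveH23[OF E2])
qed

lemma nf: assumes li: "lin_indep2 u v" and on: "\<forall>x\<in>span2 u v. P x = 0"
  shows "span2 u v \<in> set L27"
proof -
  have allP: "\<forall>s t. P (\<lambda>k. s * p k + t * q k) = 0" if sp: "span2 u v = span2 p q" for p q
  proof (intro allI)
    fix s t
    have "(\<lambda>k. s * p k + t * q k) \<in> span2 p q" unfolding span2_def by blast
    then show "P (\<lambda>k. s * p k + t * q k) = 0" using on sp by blast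
  qed
  show ?thesis
  proof (cases "mnr u v 0 1 = 0")
    case nz: False
    have M: "mnr u v 0 1 \<noteq> 0" using nz by simp
    define p where "p = pp u v 0 1"
    define q where "q = qq u v 0 1"
    have pv: "p 0 = 1" "p 1 = 0" "q 0 = 0" "q 1 = 1" using pq_vals[OF M] unfolding p_def q_def by auto
    have sp: "span2 u v = span2 p q" unfolding p_def q_def by (rule pq_span[OF M])
    have pe0: "p = vec 1 0 (p 2) (p 3)"
    proof -
      have "p = vec (p 0) (p 1) (p 2) (p 3)" by (rule fun4_eq)
      also have "\<dots> = vec 1 0 (p 2) (p 3)" using pv  by simp
      finally show ?thesis .
    qed
    have qe0: "q = vec 0 1 (q 2) (q 3)"
    proof -
      have "q = vec (q 0) (q 1) (q 2) (q 3)" by (rule fun4_eq)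
      also have "\<dots> = vec 0 1 (q 2) (q 3)" using pv  by simp
      finally show ?thesis .
    qed
    obtain a b c d where pe: "p = vec 1 0 a b" and qe: "q = vec 0 1 c d" using pe0 qe0 by blast
    have aP: "\<forall>s t. P (\<lambda>k. s * ((vec 1 0 a b) :: 4 \<Rightarrow> 'a) k + t * (vec 0 1 c d) k) = 0" using allP[OF sp] unfolding pe qe .
    have "span2 u v = (G a b c d)" unfolding sp pe qe G_def ..
    then show ?thesis using chart_G[OF aP] by simp
  next
    case z01: True
    show ?thesis
    proof (cases "mnr u v 0 2 = 0")
      case nz: False
      have M: "mnr u v 0 2 \<noteq> 0" using nz by simp
      define p where "p = pp u v 0 2"
      define q where "q = qq u v 0 2"
      have pv: "p 0 = 1" "p 2 = 0" "q 0 = 0" "q 2 = 1" using pq_vals[OF M] unfolding p_def q_def by auto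
      have sp: "span2 u v = span2 p q" unfolding p_def q_def by (rule pq_span[OF M])
      have m01: "mnr p q 0 1 = 0" unfolding p_def q_def pq_mnr[OF M] using z01 by simp
      have co0: "q 1 = 0" using m01 pv by (simp add: mnr_def)
      have pe0: "p = vec 1 (p 1) 0 (p 3)"
      proof -
        have "p = vec (p 0) (p 1) (p 2) (p 3)" by (rule fun4_eq)
        also have "\<dots> = vec 1 (p 1) 0 (p 3)" using pv co0 by simp
        finally show ?thesis .
      qed
      have qe0: "q = vec 0 0 1 (q 3)"
      proof -
        have "q = vec (q 0) (q 1) (q 2) (q 3)" by (rule fun4_eq)
        also have "\<dots> = vec 0 0 1 (q 3)" using pv co0 by simp
        finally show ?thesis .
      qed
      obtain a b c where pe: "p = vec 1 a 0 b" and qe: "q = vec 0 0 1 c" using pe0 qe0 by blast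
      have aP: "\<forall>s t. P (\<lambda>k. s * ((vec 1 a 0 b) :: 4 \<Rightarrow> 'a) k + t * (vec 0 0 1 c) k) = 0" using allP[OF sp] unfolding pe qe .
      have "span2 u v = (H02 a b c)" unfolding sp pe qe H02_def ..
      then show ?thesis using chart_H02[OF aP] by simp
    next
      case z02: True
      show ?thesis
      proof (cases "mnr u v 0 3 = 0")
        case nz: False
        have M: "mnr u v 0 3 \<noteq> 0" using nz by simp
        define p where "p = pp u v 0 3"
        define q where "q = qq u v 0 3"
        have pv: "p 0 = 1" "p 3 = 0" "q 0 = 0" "q 3 = 1" using pq_vals[OF M] unfolding p_def q_def by auto
        have sp: "span2 u v = span2 p q" unfolding p_def q_def by (rule pq_span[OF M])
        have m01: "mnr p q 0 1 = 0" unfolding p_def q_def pq_mnr[OF M] using z01 by simp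
        have m02: "mnr p q 0 2 = 0" unfolding p_def q_def pq_mnr[OF M] using z02 by simp
        have co0: "q 1 = 0" using m01 pv by (simp add: mnr_def)
        have co1: "q 2 = 0" using m02 pv by (simp add: mnr_def)
        have pe0: "p = vec 1 (p 1) (p 2) 0"
        proof -
          have "p = vec (p 0) (p 1) (p 2) (p 3)" by (rule fun4_eq)
          also have "\<dots> = vec 1 (p 1) (p 2) 0" using pv co0 co1 by simp
          finally show ?thesis .
        qed
        have qe0: "q = vec 0 0 0 1"
        proof -
          have "q = vec (q 0) (q 1) (q 2) (q 3)" by (rule fun4_eq)
          also have "\<dots> = vec 0 0 0 1" using pv co0 co1 by simp
          finally show ?thesis .
        qed
        obtain a b where pe: "p = vec 1 a b 0" and qe: "q = vec 0 0 0 1" using pe0 qe0 by blast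
        have aP: "\<forall>s t. P (\<lambda>k. s * ((vec 1 a b 0) :: 4 \<Rightarrow> 'a) k + t * (vec 0 0 0 1) k) = 0" using allP[OF sp] unfolding pe qe .
        have "span2 u v = (H03 a b)" unfolding sp pe qe H03_def ..
        then show ?thesis using chart_H03[OF aP] by simp
      next
        case z03: True
        show ?thesis
        proof (cases "mnr u v 1 2 = 0")
          case nz: False
          have M: "mnr u v 1 2 \<noteq> 0" using nz by simp
          define p where "p = pp u v 1 2"
          define q where "q = qq u v 1 2"
          have pv: "p 1 = 1" "p 2 = 0" "q 1 = 0" "q 2 = 1" using pq_vals[OF M] unfolding p_def q_def by auto
          have sp: "span2 u v = span2 p q" unfolding p_def q_def by (rule pq_span[OF M])
          have m01: "mnr p q 0 1 = 0" unfolding p_def q_def pq_mnr[OF M] using z01 by simp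
          have m02: "mnr p q 0 2 = 0" unfolding p_def q_def pq_mnr[OF M] using z02 by simp
          have m03: "mnr p q 0 3 = 0" unfolding p_def q_def pq_mnr[OF M] using z03 by simp
          have co0: "q 0 = 0" using m01 pv by (simp add: mnr_def)
          have co1: "p 0 = 0" using m02 pv by (simp add: mnr_def)
          have pe0: "p = vec 0 1 0 (p 3)"
          proof -
            have "p = vec (p 0) (p 1) (p 2) (p 3)" by (rule fun4_eq)
            also have "\<dots> = vec 0 1 0 (p 3)" using pv co0 co1 by simp
            finally show ?thesis .
          qed
          have qe0: "q = vec 0 0 1 (q 3)"
          proof -
            have "q = vec (q 0) (q 1) (q 2) (q 3)" by (rule fun4_eq)
            also have "\<dots> = vec 0 0 1 (q 3)" using pv co0 co1 by simp
            finally show ?thesis .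
          qed
          obtain a b where pe: "p = vec 0 1 0 a" and qe: "q = vec 0 0 1 b" using pe0 qe0 by blast
          have aP: "\<forall>s t. P (\<lambda>k. s * ((vec 0 1 0 a) :: 4 \<Rightarrow> 'a) k + t * (vec 0 0 1 b) k) = 0" using allP[OF sp] unfolding pe qe .
          have "span2 u v = (H12 a b)" unfolding sp pe qe H12_def ..
          then show ?thesis using chart_H12[OF aP] by simp
        next
          case z12: True
          show ?thesis
          proof (cases "mnr u v 1 3 = 0")
            case nz: False
            have M: "mnr u v 1 3 \<noteq> 0" using nz by simp
            define p where "p = pp u v 1 3"
            define q where "q = qq u v 1 3"
            have pv: "p 1 = 1" "p 3 = 0" "q 1 = 0" "q 3 = 1" using pq_vals[OF M] unfolding p_def q_def by auto
            have sp: "span2 u v = span2 p q" unfolding p_def q_def by (rule pq_span[OF M])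
            have m01: "mnr p q 0 1 = 0" unfolding p_def q_def pq_mnr[OF M] using z01 by simp
            have m02: "mnr p q 0 2 = 0" unfolding p_def q_def pq_mnr[OF M] using z02 by simp
            have m03: "mnr p q 0 3 = 0" unfolding p_def q_def pq_mnr[OF M] using z03 by simp
            have m12: "mnr p q 1 2 = 0" unfolding p_def q_def pq_mnr[OF M] using z12 by simp
            have co0: "q 0 = 0" using m01 pv by (simp add: mnr_def)
            have co1: "p 0 = 0" using m03 pv by (simp add: mnr_def)
            have co2: "q 2 = 0" using m12 pv by (simp add: mnr_def)
            have pe0: "p = vec 0 1 (p 2) 0"
            proof -
              have "p = vec (p 0) (p 1) (p 2) (p 3)" by (rule fun4_eq)
              also have "\<dots> = vec 0 1 (p 2) 0" using pv co0 co1 co2 by simp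
              finally show ?thesis .
            qed
            have qe0: "q = vec 0 0 0 1"
            proof -
              have "q = vec (q 0) (q 1) (q 2) (q 3)" by (rule fun4_eq)
              also have "\<dots> = vec 0 0 0 1" using pv co0 co1 co2 by simp
              finally show ?thesis .
            qed
            obtain a where pe: "p = vec 0 1 a 0" and qe: "q = vec 0 0 0 1" using pe0 qe0 by blast
            have aP: "\<forall>s t. P (\<lambda>k. s * ((vec 0 1 a 0) :: 4 \<Rightarrow> 'a) k + t * (vec 0 0 0 1) k) = 0" using allP[OF sp] unfolding pe qe .
            have "span2 u v = (H13 a)" unfolding sp pe qe H13_def ..
            then show ?thesis using chart_H13[OF aP] by simp
          next
            case z13: True
            show ?thesis
            proof (cases "mnr u v 2 3 = 0")
              case nz: False
              have M: "mnr u v 2 3 \<noteq> 0" using nz by simp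
              define p where "p = pp u v 2 3"
              define q where "q = qq u v 2 3"
              have pv: "p 2 = 1" "p 3 = 0" "q 2 = 0" "q 3 = 1" using pq_vals[OF M] unfolding p_def q_def by auto
              have sp: "span2 u v = span2 p q" unfolding p_def q_def by (rule pq_span[OF M])
              have m01: "mnr p q 0 1 = 0" unfolding p_def q_def pq_mnr[OF M] using z01 by simp
              have m02: "mnr p q 0 2 = 0" unfolding p_def q_def pq_mnr[OF M] using z02 by simp
              have m03: "mnr p q 0 3 = 0" unfolding p_def q_def pq_mnr[OF M] using z03 by simp
              have m12: "mnr p q 1 2 = 0" unfolding p_def q_def pq_mnr[OF M] using z12 by simp
              have m13: "mnr p q 1 3 = 0" unfolding p_def q_def pq_mnr[OF M] using z13 by simp
              have co0: "q 0 = 0" using m02 pv by (simp add: mnr_def)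
              have co1: "p 0 = 0" using m03 pv by (simp add: mnr_def)
              have co2: "q 1 = 0" using m12 pv by (simp add: mnr_def)
              have co3: "p 1 = 0" using m13 pv by (simp add: mnr_def)
              have pe0: "p = vec 0 0 1 0"
              proof -
                have "p = vec (p 0) (p 1) (p 2) (p 3)" by (rule fun4_eq)
                also have "\<dots> = vec 0 0 1 0" using pv co0 co1 co2 co3 by simp
                finally show ?thesis .
              qed
              have qe0: "q = vec 0 0 0 1"
              proof -
                have "q = vec (q 0) (q 1) (q 2) (q 3)" by (rule fun4_eq)
                also have "\<dots> = vec 0 0 0 1" using pv co0 co1 co2 co3 by simp
                finally show ?thesis .
              qed
              have pe: "p = vec 0 0 1 0" and qe: "q = vec 0 0 0 1" using pe0 qe0 by simp_all
              have aP: "\<forall>s t. P (\<lambda>k. s * ((vec 0 0 1 0) :: 4 \<Rightarrow> 'a) k + t * (vec 0 0 0 1) k) = 0" using allP[OF sp] unfolding pe qe .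
              have "span2 u v = H23" unfolding sp pe qe H23_def ..
              then show ?thesis using chart_H23[OF aP] by simp
            next
              case z23: True
              show ?thesis using dep[OF z01 z02 z03 z12 z13 z23] li by blast
            qed
          qed
        qed
      qed
    qed
  qed
qed

end


theorem proposition7p3:
  assumes "CARD('k::field) = 8"
  shows "\<exists>c :: 'k cubic_form. smooth_cubic c \<and> card (lines_on c) = 27 \<and>
           (\<forall>L\<in>lines_on c. defined_over_base L)"
proof -
  have two: "(2::'k) = 0" by (rule card8_two[OF assms])
  obtain a0 :: 'k where r0: "a0^3 + a0 + 1 = 0" using card8_root[OF assms] by blast
  have "to_ac (2::'k) = 2" by simp
  then have twoK: "(2::'k alg_closure) = 0" using two by simp
  have "to_ac (a0^3 + a0 + 1) = to_ac 0" using r0 by simp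
  then have rK: "(to_ac a0)^3 + to_ac a0 + 1 = 0" by simp
  interpret F8 "to_ac a0" using twoK rK by unfold_locales
  have LO: "lines_on (c0::'k cubic_form) = set L27"
  proof
    show "lines_on (c0::'k cubic_form) \<subseteq> set L27"
    proof
      fix L assume "L \<in> lines_on (c0::'k cubic_form)"
      then have il: "is_line L" and on: "\<forall>x\<in>L. P x = 0" by (auto simp: lines_on_def eval_form_c0)
      then obtain u v where li: "lin_indep2 u v" and Ld: "L = span2 u v" by (auto simp: is_line_def)
      show "L \<in> set L27" using nf[OF li] on Ld by simp
    qed
    show "set L27 \<subseteq> lines_on (c0::'k cubic_form)" using L27_on by (auto simp: lines_on_def eval_form_c0)
  qed
  have rA: "to_ac a0 \<in> range to_ac" by (rule rangeI)
  show ?thesis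
  proof (intro exI[of _ "c0::'k cubic_form"] conjI)
    show "smooth_cubic (c0::'k cubic_form)" by (rule smooth_c0[OF twoK])
    show "card (lines_on (c0::'k cubic_form)) = 27"
      unfolding LO using L27_distinct L27_len by (simp add: distinct_card)
    show "\<forall>L\<in>lines_on (c0::'k cubic_form). defined_over_base L"
      unfolding LO L27_def L27gen_def
      using rA by (simp add: dob_G dob_H02 dob_H03 dob_H12 dob_H13 rng_0 rng_1 rng_add rng_pow)
  qed
qed

end
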